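(* If a connected DGA has a nontrivial $a$-Massey product, then it is not formal.
   Context: A DGA is a graded-commutative differential graded algebra over $\mathbb R$, connected if $H^0=\mathbb R$; $|x|$ denotes degree and $\overline{x}=(-1)^{|x|}x$. Given closed $a,b_1,\dots,b_n$ with $|a|$ even and each $a\wedge b_i$ exact, the $a$-Massey product is $\langle a;b_1,\dots,b_n\rangle=\{[\sum_{i=1}^n\overline{\xi_1}\wedge\cdots\wedge\overline{\xi_{i-1}}\wedge b_i\wedge\xi_{i+1}\wedge\cdots\wedge\xi_n] : d\xi_i=a\wedge b_i\}\subset H$; it is nontrivial if it does not contain $0$. A DGA is minimal if it is free as a graded-commutative algebra on generators $\{a_\tau\}$ indexed by a well-ordered set with $|a_\mu|\le|a_\tau|$ for $\mu<\tau$ and each $da_\tau$ expressed in terms of preceding generators; a minimal model of $\mathcal A$ is a minimal DGA $\mathcal M$ with a morphism $\mathcal M\to\mathcal A$ inducing an isomorphism in cohomology; $\mathcal A$ is formal if there is a DGA morphism $\mathcal M\to H(\mathcal A)$ (with zero differential) inducing an isomorphism in cohomology. *)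

theory Defs
  imports Complex_Main
begin

text \<open>A DGA is encoded by its homogeneous pieces A^k (k an integer degree; pieces of
negative degree are zero), with degree-indexed vector space operations, a
multiplication A^k x A^l -> A^(k+l), a unit in A^0 and a differential A^k -> A^(k+1).\<close>

record 'a dga =
  dcar  :: "int \<Rightarrow> 'a set"
  dzero :: "int \<Rightarrow> 'a"
  dadd  :: "int \<Rightarrow> 'a \<Rightarrow> 'a \<Rightarrow> 'a"
  dsmul :: "int \<Rightarrow> real \<Rightarrow> 'a \<Rightarrow> 'a"
  dmul  :: "int \<Rightarrow> int \<Rightarrow> 'a \<Rightarrow> 'a \<Rightarrow> 'a"
  dunit :: "'a"
  ddiff :: "int \<Rightarrow> 'a \<Rightarrow> 'a"

definition sgn_deg :: "int \<Rightarrow> real" where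
  "sgn_deg k = (if even k then 1 else -1)"

definition is_dga :: "('a, 'b) dga_scheme \<Rightarrow> bool" where
  "is_dga A \<longleftrightarrow>
    \<comment> \<open>nonnegatively graded\<close>
    (\<forall>k<0. dcar A k = {dzero A k}) \<and>
    \<comment> \<open>each A^k is a real vector space\<close>
    (\<forall>k. dzero A k \<in> dcar A k) \<and>
    (\<forall>k. \<forall>x\<in>dcar A k. \<forall>y\<in>dcar A k. dadd A k x y \<in> dcar A k) \<and>
    (\<forall>k c. \<forall>x\<in>dcar A k. dsmul A k c x \<in> dcar A k) \<and>
    (\<forall>k. \<forall>x\<in>dcar A k. \<forall>y\<in>dcar A k. \<forall>z\<in>dcar A k.
        dadd A k (dadd A k x y) z = dadd A k x (dadd A k y z)) \<and>
    (\<forall>k. \<forall>x\<in>dcar A k. \<forall>y\<in>dcar A k. dadd A k x y = dadd A k y x) \<and>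
    (\<forall>k. \<forall>x\<in>dcar A k. dadd A k (dzero A k) x = x) \<and>
    (\<forall>k. \<forall>x\<in>dcar A k. \<exists>y\<in>dcar A k. dadd A k x y = dzero A k) \<and>
    (\<forall>k. \<forall>x\<in>dcar A k. dsmul A k 1 x = x) \<and>
    (\<forall>k c e. \<forall>x\<in>dcar A k. dsmul A k c (dsmul A k e x) = dsmul A k (c * e) x) \<and>
    (\<forall>k c e. \<forall>x\<in>dcar A k. dsmul A k (c + e) x = dadd A k (dsmul A k c x) (dsmul A k e x)) \<and>
    (\<forall>k c. \<forall>x\<in>dcar A k. \<forall>y\<in>dcar A k.
        dsmul A k c (dadd A k x y) = dadd A k (dsmul A k c x) (dsmul A k c y)) \<and>
    \<comment> \<open>bilinear, associative, unital, graded-commutative multiplication\<close>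
    (\<forall>k l. \<forall>x\<in>dcar A k. \<forall>y\<in>dcar A l. dmul A k l x y \<in> dcar A (k + l)) \<and>
    (\<forall>k l. \<forall>x\<in>dcar A k. \<forall>x'\<in>dcar A k. \<forall>y\<in>dcar A l.
        dmul A k l (dadd A k x x') y = dadd A (k + l) (dmul A k l x y) (dmul A k l x' y)) \<and>
    (\<forall>k l. \<forall>x\<in>dcar A k. \<forall>y\<in>dcar A l. \<forall>y'\<in>dcar A l.
        dmul A k l x (dadd A l y y') = dadd A (k + l) (dmul A k l x y) (dmul A k l x y')) \<and>
    (\<forall>k l c. \<forall>x\<in>dcar A k. \<forall>y\<in>dcar A l.
        dmul A k l (dsmul A k c x) y = dsmul A (k + l) c (dmul A k l x y)) \<and>
    (\<forall>k l c. \<forall>x\<in>dcar A k. \<forall>y\<in>dcar A l.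
        dmul A k l x (dsmul A l c y) = dsmul A (k + l) c (dmul A k l x y)) \<and>
    (\<forall>k l m. \<forall>x\<in>dcar A k. \<forall>y\<in>dcar A l. \<forall>z\<in>dcar A m.
        dmul A (k + l) m (dmul A k l x y) z = dmul A k (l + m) x (dmul A l m y z)) \<and>
    dunit A \<in> dcar A 0 \<and>
    (\<forall>k. \<forall>x\<in>dcar A k. dmul A 0 k (dunit A) x = x \<and> dmul A k 0 x (dunit A) = x) \<and>
    (\<forall>k l. \<forall>x\<in>dcar A k. \<forall>y\<in>dcar A l.
        dmul A k l x y = dsmul A (k + l) (sgn_deg (k * l)) (dmul A l k y x)) \<and>
    \<comment> \<open>differential: linear, of degree +1, square zero, graded Leibniz rule\<close>
    (\<forall>k. \<forall>x\<in>dcar A k. ddiff A k x \<in> dcar A (k + 1)) \<and>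
    (\<forall>k. \<forall>x\<in>dcar A k. \<forall>y\<in>dcar A k.
        ddiff A k (dadd A k x y) = dadd A (k + 1) (ddiff A k x) (ddiff A k y)) \<and>
    (\<forall>k c. \<forall>x\<in>dcar A k. ddiff A k (dsmul A k c x) = dsmul A (k + 1) c (ddiff A k x)) \<and>
    (\<forall>k. \<forall>x\<in>dcar A k. ddiff A (k + 1) (ddiff A k x) = dzero A (k + 2)) \<and>
    (\<forall>k l. \<forall>x\<in>dcar A k. \<forall>y\<in>dcar A l.
        ddiff A (k + l) (dmul A k l x y) =
          dadd A (k + l + 1) (dmul A (k + 1) l (ddiff A k x) y)
                             (dsmul A (k + l + 1) (sgn_deg k) (dmul A k (l + 1) x (ddiff A l y))))"

definition cocycles :: "('a, 'b) dga_scheme \<Rightarrow> int \<Rightarrow> 'a set" where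
  "cocycles A k = {z \<in> dcar A k. ddiff A k z = dzero A (k + 1)}"

definition coboundaries :: "('a, 'b) dga_scheme \<Rightarrow> int \<Rightarrow> 'a set" where
  "coboundaries A k = {ddiff A (k - 1) x | x. x \<in> dcar A (k - 1)}"

definition cls :: "('a, 'b) dga_scheme \<Rightarrow> int \<Rightarrow> 'a \<Rightarrow> 'a set" where
  "cls A k z = {dadd A k z b | b. b \<in> coboundaries A k}"

definition rep :: "'a set \<Rightarrow> 'a" where
  "rep X = (SOME x. x \<in> X)"

definition cohom :: "('a, 'b) dga_scheme \<Rightarrow> 'a set dga" where
  "cohom A = \<lparr> dcar = (\<lambda>k. cls A k ` cocycles A k),
               dzero = (\<lambda>k. cls A k (dzero A k)),
               dadd = (\<lambda>k X Y. cls A k (dadd A k (rep X) (rep Y))),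
               dsmul = (\<lambda>k c X. cls A k (dsmul A k c (rep X))),
               dmul = (\<lambda>k l X Y. cls A (k + l) (dmul A k l (rep X) (rep Y))),
               dunit = cls A 0 (dunit A),
               ddiff = (\<lambda>k X. cls A (k + 1) (dzero A (k + 1))) \<rparr>"

text \<open>Connected: H^0(A) = R, i.e. the degree-0 cocycles are exactly the real
multiples of the (nonzero) unit (there are no degree-0 coboundaries).\<close>
definition connected_dga :: "('a, 'b) dga_scheme \<Rightarrow> bool" where
  "connected_dga A \<longleftrightarrow> dunit A \<noteq> dzero A 0 \<and>
     (\<forall>z\<in>cocycles A 0. \<exists>c. z = dsmul A 0 c (dunit A))"

definition dga_hom :: "('a, 'c) dga_scheme \<Rightarrow> ('b, 'd) dga_scheme \<Rightarrow> (int \<Rightarrow> 'a \<Rightarrow> 'b) \<Rightarrow> bool" where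
  "dga_hom M A f \<longleftrightarrow>
    (\<forall>k. \<forall>x\<in>dcar M k. f k x \<in> dcar A k) \<and>
    (\<forall>k. \<forall>x\<in>dcar M k. \<forall>y\<in>dcar M k. f k (dadd M k x y) = dadd A k (f k x) (f k y)) \<and>
    (\<forall>k c. \<forall>x\<in>dcar M k. f k (dsmul M k c x) = dsmul A k c (f k x)) \<and>
    (\<forall>k l. \<forall>x\<in>dcar M k. \<forall>y\<in>dcar M l.
        f (k + l) (dmul M k l x y) = dmul A k l (f k x) (f l y)) \<and>
    f 0 (dunit M) = dunit A \<and>
    (\<forall>k. \<forall>x\<in>dcar M k. f (k + 1) (ddiff M k x) = ddiff A k (f k x))"

text \<open>A morphism induces an isomorphism in cohomology (in every degree):
injectivity and surjectivity of the induced map H^k(M) -> H^k(A).\<close>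
definition quasi_iso :: "('a, 'c) dga_scheme \<Rightarrow> ('b, 'd) dga_scheme \<Rightarrow> (int \<Rightarrow> 'a \<Rightarrow> 'b) \<Rightarrow> bool" where
  "quasi_iso M A f \<longleftrightarrow>
    (\<forall>k. \<forall>z\<in>cocycles M k. f k z \<in> coboundaries A k \<longrightarrow> z \<in> coboundaries M k) \<and>
    (\<forall>k. \<forall>w\<in>cocycles A k. \<exists>z\<in>cocycles M k. \<exists>b\<in>coboundaries A k. w = dadd A k (f k z) b)"

primrec prodl :: "('a, 'b) dga_scheme \<Rightarrow> (int \<times> 'a) list \<Rightarrow> int \<times> 'a" where
  "prodl A [] = (0, dunit A)"
| "prodl A (kx # xs) =
     (fst kx + fst (prodl A xs), dmul A (fst kx) (fst (prodl A xs)) (snd kx) (snd (prodl A xs)))"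

definition lcomb :: "('a, 'b) dga_scheme \<Rightarrow> int \<Rightarrow> (real \<times> (int \<times> 'a) list) list \<Rightarrow> 'a" where
  "lcomb A k ts = foldr (\<lambda>cm acc. dadd A k (dsmul A k (fst cm) (snd (prodl A (snd cm)))) acc) ts (dzero A k)"

definition gen_span :: "('a, 'b) dga_scheme \<Rightarrow> int \<Rightarrow> (int \<times> 'a) set \<Rightarrow> 'a set" where
  "gen_span A k S = {y. \<exists>ts. (\<forall>cm\<in>set ts. set (snd cm) \<subseteq> S \<and> fst (prodl A (snd cm)) = k)
                            \<and> y = lcomb A k ts}"

definition std_mono :: "(int \<times> 'a) set \<Rightarrow> ((int \<times> 'a) \<times> (int \<times> 'a)) set \<Rightarrow> (int \<times> 'a) list \<Rightarrow> bool" where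
  "std_mono G r m \<longleftrightarrow> set m \<subseteq> G \<and> sorted_wrt (\<lambda>x y. (x, y) \<in> r \<and> (x = y \<longrightarrow> even (fst x))) m"

text \<open>M is the free graded-commutative algebra on the generators G: in each degree
the standard monomials form a basis.\<close>
definition free_gc_on :: "('a, 'b) dga_scheme \<Rightarrow> (int \<times> 'a) set \<Rightarrow> ((int \<times> 'a) \<times> (int \<times> 'a)) set \<Rightarrow> bool" where
  "free_gc_on M G r \<longleftrightarrow>
    (\<forall>k. \<forall>x\<in>dcar M k. \<exists>ts. (\<forall>cm\<in>set ts. std_mono G r (snd cm) \<and> fst (prodl M (snd cm)) = k)
                            \<and> x = lcomb M k ts) \<and>
    (\<forall>k ts. distinct (map snd ts) \<and> (\<forall>cm\<in>set ts. std_mono G r (snd cm) \<and> fst (prodl M (snd cm)) = k)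
            \<and> lcomb M k ts = dzero M k \<longrightarrow> (\<forall>cm\<in>set ts. fst cm = 0))"

text \<open>Minimal DGA: free graded-commutative on generators a_tau (recorded as pairs
(degree, element)) indexed by a well-ordered set, degrees nondecreasing along the
order, and each d a_tau lying in the subalgebra generated by the preceding generators.\<close>
definition minimal_dga :: "('a, 'b) dga_scheme \<Rightarrow> bool" where
  "minimal_dga M \<longleftrightarrow> is_dga M \<and>
    (\<exists>G r. Well_order r \<and> Field r = G \<and>
       (\<forall>g\<in>G. snd g \<in> dcar M (fst g)) \<and>
       (\<forall>\<mu> \<tau>. (\<mu>, \<tau>) \<in> r \<longrightarrow> fst \<mu> \<le> fst \<tau>) \<and>
       (\<forall>\<tau>\<in>G. ddiff M (fst \<tau>) (snd \<tau>) \<in> gen_span M (fst \<tau> + 1) {\<mu>. (\<mu>, \<tau>) \<in> r \<and> \<mu> \<noteq> \<tau>}) \<and>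
       free_gc_on M G r)"

definition minimal_model :: "('m, 'c) dga_scheme \<Rightarrow> ('a, 'b) dga_scheme \<Rightarrow> (int \<Rightarrow> 'm \<Rightarrow> 'a) \<Rightarrow> bool" where
  "minimal_model M A f \<longleftrightarrow> minimal_dga M \<and> dga_hom M A f \<and> quasi_iso M A f"

text \<open>Formality, with the minimal model taken from the carrier type 'm.
(HOL cannot quantify over types inside a formula; a theorem with the free type
variable 'm asserts the claim for every carrier type.)\<close>
definition formal :: "'m itself \<Rightarrow> ('a, 'b) dga_scheme \<Rightarrow> bool" where
  "formal (_ :: 'm itself) A \<longleftrightarrow>
     (\<exists>(M :: 'm dga) f g. minimal_model M A f \<and> dga_hom M (cohom A) g \<and> quasi_iso M (cohom A) g)"

definition bar :: "('a, 'b) dga_scheme \<Rightarrow> int \<Rightarrow> 'a \<Rightarrow> 'a" where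
  "bar A k x = dsmul A k (sgn_deg k) x"

definition massey_data :: "('a, 'b) dga_scheme \<Rightarrow> int \<Rightarrow> 'a \<Rightarrow> nat \<Rightarrow> (nat \<Rightarrow> int) \<Rightarrow> (nat \<Rightarrow> 'a) \<Rightarrow> bool" where
  "massey_data A p a n q b \<longleftrightarrow> even p \<and> a \<in> cocycles A p \<and>
     (\<forall>i\<in>{1..n}. b i \<in> cocycles A (q i) \<and> dmul A p (q i) a (b i) \<in> coboundaries A (p + q i))"

definition massey_deg :: "int \<Rightarrow> nat \<Rightarrow> (nat \<Rightarrow> int) \<Rightarrow> int" where
  "massey_deg p n q = (int n - 1) * (p - 1) + (\<Sum>j = 1..n. q j)"

definition massey_term :: "('a, 'b) dga_scheme \<Rightarrow> int \<Rightarrow> nat \<Rightarrow> (nat \<Rightarrow> int) \<Rightarrow> (nat \<Rightarrow> 'a) \<Rightarrow> (nat \<Rightarrow> 'a) \<Rightarrow> nat \<Rightarrow> 'a" where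
  "massey_term A p n q b \<xi> i = snd (prodl A
      (map (\<lambda>j. (p + q j - 1, bar A (p + q j - 1) (\<xi> j))) [1..<i]
       @ [(q i, b i)]
       @ map (\<lambda>j. (p + q j - 1, \<xi> j)) [Suc i..<Suc n]))"

definition massey_sum :: "('a, 'b) dga_scheme \<Rightarrow> int \<Rightarrow> nat \<Rightarrow> (nat \<Rightarrow> int) \<Rightarrow> (nat \<Rightarrow> 'a) \<Rightarrow> (nat \<Rightarrow> 'a) \<Rightarrow> 'a" where
  "massey_sum A p n q b \<xi> =
     foldr (\<lambda>i acc. dadd A (massey_deg p n q) (massey_term A p n q b \<xi> i) acc) [1..<Suc n]
           (dzero A (massey_deg p n q))"

definition massey :: "('a, 'b) dga_scheme \<Rightarrow> int \<Rightarrow> 'a \<Rightarrow> nat \<Rightarrow> (nat \<Rightarrow> int) \<Rightarrow> (nat \<Rightarrow> 'a) \<Rightarrow> 'a set set" where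
  "massey A p a n q b =
     {cls A (massey_deg p n q) (massey_sum A p n q b \<xi>) | \<xi>.
        \<forall>i\<in>{1..n}. \<xi> i \<in> dcar A (p + q i - 1) \<and> ddiff A (p + q i - 1) (\<xi> i) = dmul A p (q i) a (b i)}"

definition nontrivial_massey :: "('a, 'b) dga_scheme \<Rightarrow> int \<Rightarrow> 'a \<Rightarrow> nat \<Rightarrow> (nat \<Rightarrow> int) \<Rightarrow> (nat \<Rightarrow> 'a) \<Rightarrow> bool" where
  "nontrivial_massey A p a n q b \<longleftrightarrow> dzero (cohom A) (massey_deg p n q) \<notin> massey A p a n q b"

end

theory Submission
  imports Defs
begin


lemma sgn_deg_even[simp]: "even k \<Longrightarrow> sgn_deg k = 1" by (simp add: sgn_deg_def)
lemma sgn_deg_odd[simp]: "odd k \<Longrightarrow> sgn_deg k = -1" by (simp add: sgn_deg_def)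
lemma sgn_deg_add: "sgn_deg (k + l) = sgn_deg k * sgn_deg l" by (auto simp: sgn_deg_def)
lemma sgn_deg_mult: "sgn_deg (k * l) = (if even k \<or> even l then 1 else -1)" by (auto simp: sgn_deg_def)
lemma sgn_deg_sq[simp]: "sgn_deg k * sgn_deg k = 1" by (auto simp: sgn_deg_def)

locale dgaL =
  fixes A :: "('a, 'b) dga_scheme"
  assumes dga: "is_dga A"
begin

lemmas ax = dga[unfolded is_dga_def]

abbreviation "C \<equiv> dcar A"
abbreviation "ad \<equiv> dadd A"
abbreviation "sm \<equiv> dsmul A"
abbreviation "mu \<equiv> dmul A"
abbreviation "z0 \<equiv> dzero A"
abbreviation "dd \<equiv> ddiff A"
abbreviation "one \<equiv> dunit A"

lemma neg_deg: "k < 0 \<Longrightarrow> C k = {z0 k}" using ax[THEN conjunct1] by blast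
lemma zero_C[simp]: "z0 k \<in> C k" using ax[THEN conjunct2, THEN conjunct1] by blast
lemma add_C0: "x \<in> C k \<Longrightarrow> y \<in> C k \<Longrightarrow> ad k x y \<in> C k" using ax[THEN conjunct2, THEN conjunct2, THEN conjunct1] by blast
lemma smul_C0: "x \<in> C k \<Longrightarrow> sm k c x \<in> C k" using ax[THEN conjunct2, THEN conjunct2, THEN conjunct2, THEN conjunct1] by blast
lemma add_assoc: "x \<in> C k \<Longrightarrow> y \<in> C k \<Longrightarrow> z \<in> C k \<Longrightarrow> ad k (ad k x y) z = ad k x (ad k y z)"
  using ax[THEN conjunct2, THEN conjunct2, THEN conjunct2, THEN conjunct2, THEN conjunct1] by blast
lemma add_comm: "x \<in> C k \<Longrightarrow> y \<in> C k \<Longrightarrow> ad k x y = ad k y x"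
  using ax[THEN conjunct2, THEN conjunct2, THEN conjunct2, THEN conjunct2, THEN conjunct2, THEN conjunct1] by blast
lemma add_zero_left[simp]: "x \<in> C k \<Longrightarrow> ad k (z0 k) x = x"
  using ax[THEN conjunct2, THEN conjunct2, THEN conjunct2, THEN conjunct2, THEN conjunct2, THEN conjunct2, THEN conjunct1] by blast
lemma add_inv_ex: "x \<in> C k \<Longrightarrow> \<exists>y\<in>C k. ad k x y = z0 k"
  using ax[THEN conjunct2, THEN conjunct2, THEN conjunct2, THEN conjunct2, THEN conjunct2, THEN conjunct2, THEN conjunct2, THEN conjunct1] by blast
lemma smul_one[simp]: "x \<in> C k \<Longrightarrow> sm k 1 x = x"
  using ax[THEN conjunct2, THEN conjunct2, THEN conjunct2, THEN conjunct2, THEN conjunct2, THEN conjunct2, THEN conjunct2, THEN conjunct2, THEN conjunct1] by blast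
lemma smul_smul[simp]: "x \<in> C k \<Longrightarrow> sm k c (sm k e x) = sm k (c * e) x"
  using ax[THEN conjunct2, THEN conjunct2, THEN conjunct2, THEN conjunct2, THEN conjunct2, THEN conjunct2, THEN conjunct2, THEN conjunct2, THEN conjunct2, THEN conjunct1] by blast
lemma smul_add_scalar: "x \<in> C k \<Longrightarrow> sm k (c + e) x = ad k (sm k c x) (sm k e x)"
  using ax[THEN conjunct2, THEN conjunct2, THEN conjunct2, THEN conjunct2, THEN conjunct2, THEN conjunct2, THEN conjunct2, THEN conjunct2, THEN conjunct2, THEN conjunct2, THEN conjunct1] by blast
lemma smul_add: "x \<in> C k \<Longrightarrow> y \<in> C k \<Longrightarrow> sm k c (ad k x y) = ad k (sm k c x) (sm k c y)"
  using ax[THEN conjunct2, THEN conjunct2, THEN conjunct2, THEN conjunct2, THEN conjunct2, THEN conjunct2, THEN conjunct2, THEN conjunct2, THEN conjunct2, THEN conjunct2, THEN conjunct2, THEN conjunct1] by blast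
lemma mul_C0: "x \<in> C k \<Longrightarrow> y \<in> C l \<Longrightarrow> mu k l x y \<in> C (k + l)"
  using ax[THEN conjunct2, THEN conjunct2, THEN conjunct2, THEN conjunct2, THEN conjunct2, THEN conjunct2, THEN conjunct2, THEN conjunct2, THEN conjunct2, THEN conjunct2, THEN conjunct2, THEN conjunct2, THEN conjunct1] by blast
lemma mul_add_left: "x \<in> C k \<Longrightarrow> x' \<in> C k \<Longrightarrow> y \<in> C l \<Longrightarrow>
   mu k l (ad k x x') y = ad (k + l) (mu k l x y) (mu k l x' y)"
  using ax[THEN conjunct2, THEN conjunct2, THEN conjunct2, THEN conjunct2, THEN conjunct2, THEN conjunct2, THEN conjunct2, THEN conjunct2, THEN conjunct2, THEN conjunct2, THEN conjunct2, THEN conjunct2, THEN conjunct2, THEN conjunct1] by blast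
lemma mul_add_right: "x \<in> C k \<Longrightarrow> y \<in> C l \<Longrightarrow> y' \<in> C l \<Longrightarrow>
   mu k l x (ad l y y') = ad (k + l) (mu k l x y) (mu k l x y')"
  using ax[THEN conjunct2, THEN conjunct2, THEN conjunct2, THEN conjunct2, THEN conjunct2, THEN conjunct2, THEN conjunct2, THEN conjunct2, THEN conjunct2, THEN conjunct2, THEN conjunct2, THEN conjunct2, THEN conjunct2, THEN conjunct2, THEN conjunct1] by blast
lemma mul_smul_left: "x \<in> C k \<Longrightarrow> y \<in> C l \<Longrightarrow> mu k l (sm k c x) y = sm (k + l) c (mu k l x y)"
  using ax[THEN conjunct2, THEN conjunct2, THEN conjunct2, THEN conjunct2, THEN conjunct2, THEN conjunct2, THEN conjunct2, THEN conjunct2, THEN conjunct2, THEN conjunct2, THEN conjunct2, THEN conjunct2, THEN conjunct2, THEN conjunct2, THEN conjunct2, THEN conjunct1] by blast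
lemma mul_smul_right: "x \<in> C k \<Longrightarrow> y \<in> C l \<Longrightarrow> mu k l x (sm l c y) = sm (k + l) c (mu k l x y)"
  using ax[THEN conjunct2, THEN conjunct2, THEN conjunct2, THEN conjunct2, THEN conjunct2, THEN conjunct2, THEN conjunct2, THEN conjunct2, THEN conjunct2, THEN conjunct2, THEN conjunct2, THEN conjunct2, THEN conjunct2, THEN conjunct2, THEN conjunct2, THEN conjunct2, THEN conjunct1] by blast
lemma mul_assoc0: "x \<in> C k \<Longrightarrow> y \<in> C l \<Longrightarrow> z \<in> C m \<Longrightarrow>
   mu (k + l) m (mu k l x y) z = mu k (l + m) x (mu l m y z)"
  using ax[THEN conjunct2, THEN conjunct2, THEN conjunct2, THEN conjunct2, THEN conjunct2, THEN conjunct2, THEN conjunct2, THEN conjunct2, THEN conjunct2, THEN conjunct2, THEN conjunct2, THEN conjunct2, THEN conjunct2, THEN conjunct2, THEN conjunct2, THEN conjunct2, THEN conjunct2, THEN conjunct1] by blast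
lemma unit_C[simp]: "one \<in> C 0" using ax[THEN conjunct2, THEN conjunct2, THEN conjunct2, THEN conjunct2, THEN conjunct2, THEN conjunct2, THEN conjunct2, THEN conjunct2, THEN conjunct2, THEN conjunct2, THEN conjunct2, THEN conjunct2, THEN conjunct2, THEN conjunct2, THEN conjunct2, THEN conjunct2, THEN conjunct2, THEN conjunct2, THEN conjunct1] by blast
lemma unit_left[simp]: "x \<in> C k \<Longrightarrow> mu 0 k one x = x" using ax[THEN conjunct2, THEN conjunct2, THEN conjunct2, THEN conjunct2, THEN conjunct2, THEN conjunct2, THEN conjunct2, THEN conjunct2, THEN conjunct2, THEN conjunct2, THEN conjunct2, THEN conjunct2, THEN conjunct2, THEN conjunct2, THEN conjunct2, THEN conjunct2, THEN conjunct2, THEN conjunct2, THEN conjunct2, THEN conjunct1] by blast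
lemma unit_right[simp]: "x \<in> C k \<Longrightarrow> mu k 0 x one = x" using ax[THEN conjunct2, THEN conjunct2, THEN conjunct2, THEN conjunct2, THEN conjunct2, THEN conjunct2, THEN conjunct2, THEN conjunct2, THEN conjunct2, THEN conjunct2, THEN conjunct2, THEN conjunct2, THEN conjunct2, THEN conjunct2, THEN conjunct2, THEN conjunct2, THEN conjunct2, THEN conjunct2, THEN conjunct2, THEN conjunct1] by blast
lemma mul_comm0: "x \<in> C k \<Longrightarrow> y \<in> C l \<Longrightarrow> mu k l x y = sm (k + l) (sgn_deg (k * l)) (mu l k y x)"
  using ax[THEN conjunct2, THEN conjunct2, THEN conjunct2, THEN conjunct2, THEN conjunct2, THEN conjunct2, THEN conjunct2, THEN conjunct2, THEN conjunct2, THEN conjunct2, THEN conjunct2, THEN conjunct2, THEN conjunct2, THEN conjunct2, THEN conjunct2, THEN conjunct2, THEN conjunct2, THEN conjunct2, THEN conjunct2, THEN conjunct2, THEN conjunct1] by blast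
lemma d_C0: "x \<in> C k \<Longrightarrow> dd k x \<in> C (k + 1)" using ax[THEN conjunct2, THEN conjunct2, THEN conjunct2, THEN conjunct2, THEN conjunct2, THEN conjunct2, THEN conjunct2, THEN conjunct2, THEN conjunct2, THEN conjunct2, THEN conjunct2, THEN conjunct2, THEN conjunct2, THEN conjunct2, THEN conjunct2, THEN conjunct2, THEN conjunct2, THEN conjunct2, THEN conjunct2, THEN conjunct2, THEN conjunct2, THEN conjunct1] by blast
lemma d_add: "x \<in> C k \<Longrightarrow> y \<in> C k \<Longrightarrow> dd k (ad k x y) = ad (k + 1) (dd k x) (dd k y)"
  using ax[THEN conjunct2, THEN conjunct2, THEN conjunct2, THEN conjunct2, THEN conjunct2, THEN conjunct2, THEN conjunct2, THEN conjunct2, THEN conjunct2, THEN conjunct2, THEN conjunct2, THEN conjunct2, THEN conjunct2, THEN conjunct2, THEN conjunct2, THEN conjunct2, THEN conjunct2, THEN conjunct2, THEN conjunct2, THEN conjunct2, THEN conjunct2, THEN conjunct2, THEN conjunct1] by blast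
lemma d_smul: "x \<in> C k \<Longrightarrow> dd k (sm k c x) = sm (k + 1) c (dd k x)"
  using ax[THEN conjunct2, THEN conjunct2, THEN conjunct2, THEN conjunct2, THEN conjunct2, THEN conjunct2, THEN conjunct2, THEN conjunct2, THEN conjunct2, THEN conjunct2, THEN conjunct2, THEN conjunct2, THEN conjunct2, THEN conjunct2, THEN conjunct2, THEN conjunct2, THEN conjunct2, THEN conjunct2, THEN conjunct2, THEN conjunct2, THEN conjunct2, THEN conjunct2, THEN conjunct2, THEN conjunct1] by blast
lemma d_d: "x \<in> C k \<Longrightarrow> dd (k + 1) (dd k x) = z0 (k + 2)"
  using ax[THEN conjunct2, THEN conjunct2, THEN conjunct2, THEN conjunct2, THEN conjunct2, THEN conjunct2, THEN conjunct2, THEN conjunct2, THEN conjunct2, THEN conjunct2, THEN conjunct2, THEN conjunct2, THEN conjunct2, THEN conjunct2, THEN conjunct2, THEN conjunct2, THEN conjunct2, THEN conjunct2, THEN conjunct2, THEN conjunct2, THEN conjunct2, THEN conjunct2, THEN conjunct2, THEN conjunct2, THEN conjunct1] by blast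
lemma leibniz0: "x \<in> C k \<Longrightarrow> y \<in> C l \<Longrightarrow> dd (k + l) (mu k l x y) =
   ad (k + l + 1) (mu (k + 1) l (dd k x) y) (sm (k + l + 1) (sgn_deg k) (mu k (l + 1) x (dd l y)))"
  using ax[THEN conjunct2, THEN conjunct2, THEN conjunct2, THEN conjunct2, THEN conjunct2, THEN conjunct2, THEN conjunct2, THEN conjunct2, THEN conjunct2, THEN conjunct2, THEN conjunct2, THEN conjunct2, THEN conjunct2, THEN conjunct2, THEN conjunct2, THEN conjunct2, THEN conjunct2, THEN conjunct2, THEN conjunct2, THEN conjunct2, THEN conjunct2, THEN conjunct2, THEN conjunct2, THEN conjunct2, THEN conjunct2] by blast

lemma add_C[intro,simp]: "x \<in> C k \<Longrightarrow> y \<in> C k \<Longrightarrow> ad k x y \<in> C k" by (rule add_C0)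
lemma smul_C[intro,simp]: "x \<in> C k \<Longrightarrow> sm k c x \<in> C k" by (rule smul_C0)
lemma mul_C[intro,simp]: "x \<in> C k \<Longrightarrow> y \<in> C l \<Longrightarrow> k + l = m \<Longrightarrow> mu k l x y \<in> C m"
  using mul_C0 by blast
lemma d_C[intro,simp]: "x \<in> C k \<Longrightarrow> k + 1 = m \<Longrightarrow> dd k x \<in> C m"
  using d_C0 by blast

lemma add_zero_right[simp]: "x \<in> C k \<Longrightarrow> ad k x (z0 k) = x"
  using add_comm[of x k "z0 k"] by simp

lemma add_cancel_left: "x \<in> C k \<Longrightarrow> y \<in> C k \<Longrightarrow> z \<in> C k \<Longrightarrow> ad k x y = ad k x z \<Longrightarrow> y = z"
proof -
  assume x: "x \<in> C k" and y: "y \<in> C k" and z: "z \<in> C k" and e: "ad k x y = ad k x z"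
  obtain x' where x': "x' \<in> C k" "ad k x x' = z0 k" using add_inv_ex[OF x] by blast
  have "y = ad k (ad k x' x) y" using x x' y by (simp add: add_comm)
  also have "\<dots> = ad k x' (ad k x y)" using x x' y by (simp add: add_assoc)
  also have "\<dots> = ad k x' (ad k x z)" using e by simp
  also have "\<dots> = ad k (ad k x' x) z" using x x' z by (simp add: add_assoc)
  also have "\<dots> = z" using x x' z by (simp add: add_comm)
  finally show ?thesis .
qed

lemma idem_zero: "x \<in> C k \<Longrightarrow> ad k x x = x \<Longrightarrow> x = z0 k"
  by (rule add_cancel_left[of x k x "z0 k"]) auto

lemma smul_zero_scalar[simp]: "x \<in> C k \<Longrightarrow> sm k 0 x = z0 k"
  by (rule idem_zero) (auto simp: smul_add_scalar[symmetric])

lemma smul_zero_vec[simp]: "sm k c (z0 k) = z0 k"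
proof -
  have "sm k c (z0 k) = sm k c (sm k 0 (z0 k))" by simp
  also have "\<dots> = sm k (c * 0) (z0 k)" by (simp del: smul_zero_scalar)
  also have "\<dots> = z0 k" by simp
  finally show ?thesis .
qed


lemma add_neg[simp]: "x \<in> C k \<Longrightarrow> ad k x (sm k (-1) x) = z0 k"
proof -
  assume x: "x \<in> C k"
  have "ad k x (sm k (-1) x) = ad k (sm k 1 x) (sm k (-1) x)" using x by simp
  also have "\<dots> = sm k (1 + -1) x" using x by (simp only: smul_add_scalar)
  finally show ?thesis using x by simp
qed

lemma add_neg2[simp]: "x \<in> C k \<Longrightarrow> ad k (sm k (-1) x) x = z0 k"
  using add_comm[of x k "sm k (-1) x"] by simp

lemma add_left_commute: "x \<in> C k \<Longrightarrow> y \<in> C k \<Longrightarrow> z \<in> C k \<Longrightarrow> ad k x (ad k y z) = ad k y (ad k x z)"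
proof -
  assume "x \<in> C k" "y \<in> C k" "z \<in> C k"
  thus ?thesis using add_assoc[of x k y z] add_assoc[of y k x z] add_comm[of x k y] by simp
qed

lemma mul_zero_left[simp]: "y \<in> C l \<Longrightarrow> mu k l (z0 k) y = z0 (k + l)"
proof -
  assume y: "y \<in> C l"
  have "mu k l (z0 k) y = mu k l (sm k 0 (z0 k)) y" by simp
  also have "\<dots> = z0 (k + l)" using y by (simp only: mul_smul_left zero_C) (simp add: mul_C0)
  finally show ?thesis .
qed

lemma mul_zero_right[simp]: "x \<in> C k \<Longrightarrow> mu k l x (z0 l) = z0 (k + l)"
proof -
  assume x: "x \<in> C k"
  have "mu k l x (z0 l) = mu k l x (sm l 0 (z0 l))" by simp
  also have "\<dots> = z0 (k + l)" using x by (simp only: mul_smul_right zero_C) (simp add: mul_C0)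
  finally show ?thesis .
qed

lemma d_zero[simp]: "dd k (z0 k) = z0 (k + 1)"
proof -
  have "dd k (z0 k) = dd k (sm k 0 (z0 k))" by simp
  also have "\<dots> = z0 (k + 1)" by (simp only: d_smul zero_C) (simp add: d_C0)
  finally show ?thesis .
qed

lemma d_one[simp]: "dd 0 one = z0 1"
proof -
  have "dd 0 one = dd (0 + 0) (mu 0 0 one one)" by simp
  also have "\<dots> = ad 1 (dd 0 one) (dd 0 one)"
    using leibniz0[of one 0 one 0] d_C0[of one 0] by simp
  finally show ?thesis using idem_zero[of "dd 0 one" 1] d_C0[of one 0] by simp
qed

lemma mul_assoc: "x \<in> C k \<Longrightarrow> y \<in> C l \<Longrightarrow> z \<in> C m \<Longrightarrow> kl = k + l \<Longrightarrow> lm = l + m \<Longrightarrow>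
   mu kl m (mu k l x y) z = mu k lm x (mu l m y z)"
  using mul_assoc0[of x k y l z m] by simp
lemma mul_comm: "x \<in> C k \<Longrightarrow> y \<in> C l \<Longrightarrow> m = k + l \<Longrightarrow> mu k l x y = sm m (sgn_deg (k * l)) (mu l k y x)"
  using mul_comm0[of x k y l] by simp
lemma mul_add_leftD: "x \<in> C k \<Longrightarrow> x' \<in> C k \<Longrightarrow> y \<in> C l \<Longrightarrow> m = k + l \<Longrightarrow>
   mu k l (ad k x x') y = ad m (mu k l x y) (mu k l x' y)"
  using mul_add_left[of x k x' y l] by simp
lemma mul_add_rightD: "x \<in> C k \<Longrightarrow> y \<in> C l \<Longrightarrow> y' \<in> C l \<Longrightarrow> m = k + l \<Longrightarrow>
   mu k l x (ad l y y') = ad m (mu k l x y) (mu k l x y')"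
  using mul_add_right[of x k y l y'] by simp
lemma mul_smul_leftD: "x \<in> C k \<Longrightarrow> y \<in> C l \<Longrightarrow> m = k + l \<Longrightarrow> mu k l (sm k c x) y = sm m c (mu k l x y)"
  using mul_smul_left[of x k y l c] by simp
lemma mul_smul_rightD: "x \<in> C k \<Longrightarrow> y \<in> C l \<Longrightarrow> m = k + l \<Longrightarrow> mu k l x (sm l c y) = sm m c (mu k l x y)"
  using mul_smul_right[of x k y l c] by simp
lemma d_addD: "x \<in> C k \<Longrightarrow> y \<in> C k \<Longrightarrow> m = k + 1 \<Longrightarrow> dd k (ad k x y) = ad m (dd k x) (dd k y)"
  using d_add[of x k y] by simp
lemma d_smulD: "x \<in> C k \<Longrightarrow> m = k + 1 \<Longrightarrow> dd k (sm k c x) = sm m c (dd k x)"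
  using d_smul[of x k c] by simp
lemma leibniz: "x \<in> C k \<Longrightarrow> y \<in> C l \<Longrightarrow> m = k + l \<Longrightarrow> m1 = k + l + 1 \<Longrightarrow> k1 = k + 1 \<Longrightarrow> l1 = l + 1 \<Longrightarrow>
   dd m (mu k l x y) = ad m1 (mu k1 l (dd k x) y) (sm m1 (sgn_deg k) (mu k l1 x (dd l y)))"
  using leibniz0[of x k y l] by simp

lemma smul_addD: "x \<in> C k \<Longrightarrow> y \<in> C k \<Longrightarrow> sm k c (ad k x y) = ad k (sm k c x) (sm k c y)"
  by (rule smul_add)

lemma test_T2: "odd g \<Longrightarrow> x \<in> C E \<Longrightarrow> c \<in> C g \<Longrightarrow> S \<in> C Sd \<Longrightarrow>
  mu E (g + Sd) x (mu g Sd c S) = mu g (E + Sd) c (mu E Sd (sm E (sgn_deg E) x) S)"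
proof -
  assume g: "odd g" and x: "x \<in> C E" and c: "c \<in> C g" and S: "S \<in> C Sd"
  have "mu E (g + Sd) x (mu g Sd c S) = mu (E + g) Sd (mu E g x c) S"
    using x c S by (simp add: mul_assoc)
  also have "\<dots> = mu (E + g) Sd (sm (E + g) (sgn_deg (E * g)) (mu g E c x)) S"
    using x c by (simp add: mul_comm[of x E c g "E + g"])
  also have "\<dots> = sm (E + g + Sd) (sgn_deg (E * g)) (mu (E + g) Sd (mu g E c x) S)"
    using x c S by (intro mul_smul_leftD) auto
  also have "\<dots> = sm (E + g + Sd) (sgn_deg E) (mu g (E + Sd) c (mu E Sd x S))"
    using x c S g by (subst mul_assoc) (auto simp: sgn_deg_mult sgn_deg_def)
  also have "\<dots> = mu g (E + Sd) c (mu E Sd (sm E (sgn_deg E) x) S)"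
    using x c S by (simp add: mul_smul_left mul_smul_right mul_C0 ac_simps)
  finally show ?thesis .
qed


lemma self_neg_zero: "u \<in> C k \<Longrightarrow> u = sm k (-1) u \<Longrightarrow> u = z0 k"
proof -
  assume u: "u \<in> C k" and e: "u = sm k (-1) u"
  have "ad k u u = z0 k" using add_neg[OF u] e[symmetric] by simp
  hence "sm k 2 u = z0 k" using u smul_add_scalar[of u k 1 1] by simp
  hence "sm k (1/2) (sm k 2 u) = z0 k" by simp
  thus ?thesis using u by simp
qed

lemma odd_sq_zero: "odd g \<Longrightarrow> c \<in> C g \<Longrightarrow> mu g g c c = z0 (g + g)"
proof -
  assume g: "odd g" and c: "c \<in> C g"
  have "mu g g c c = sm (g+g) (sgn_deg (g*g)) (mu g g c c)" by (rule mul_comm) (use c in auto)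
  also have "sgn_deg (g*g) = -1" using g by (simp add: sgn_deg_mult)
  finally show ?thesis by (rule self_neg_zero[rotated]) (use c in auto)
qed

end


context dgaL begin
lemma L1:
  assumes g: "odd g" and x: "x \<in> C (g + Q)" and y: "y \<in> C Q" and c: "c \<in> C g"
    and P: "P \<in> C (g + Sd)" and S: "S \<in> C Sd"
  shows "mu (g + Q) (g + Sd) (ad (g + Q) x (mu g Q c y)) (ad (g + Sd) P (mu g Sd c S))
    = ad (g + Q + (g + Sd)) (mu (g + Q) (g + Sd) x P)
        (mu g (g + Q + Sd) c (ad (g + Q + Sd) (mu Q (g + Sd) y P) (mu (g + Q) Sd (sm (g + Q) (sgn_deg (g + Q)) x) S)))"
proof -
  have cy: "mu g Q c y \<in> C (g + Q)" using c y by simp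
  have cS: "mu g Sd c S \<in> C (g + Sd)" using c S by simp
  have t2: "mu (g + Q) (g + Sd) x (mu g Sd c S) = mu g (g + Q + Sd) c (mu (g + Q) Sd (sm (g + Q) (sgn_deg (g + Q)) x) S)"
    using test_T2[OF g x c S] .
  have t3: "mu (g + Q) (g + Sd) (mu g Q c y) P = mu g (g + Q + Sd) c (mu Q (g + Sd) y P)"
    using c y P by (simp add: mul_assoc ac_simps)
  have t4: "mu (g + Q) (g + Sd) (mu g Q c y) (mu g Sd c S) = z0 (g + Q + (g + Sd))"
  proof -
    have "mu (g + Q) (g + Sd) (mu g Q c y) (mu g Sd c S) = mu g (Q + (g + Sd)) c (mu Q (g + Sd) y (mu g Sd c S))"
      using c y S by (simp add: mul_assoc)
    also have "mu Q (g + Sd) y (mu g Sd c S) = mu (Q + g) Sd (mu Q g y c) S"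
      using c y S by (simp add: mul_assoc)
    also have "mu Q g y c = sm (Q + g) (sgn_deg (Q * g)) (mu g Q c y)"
      using c y by (simp add: mul_comm[of y Q c g "Q + g"])
    also have "mu (Q + g) Sd (sm (Q + g) (sgn_deg (Q * g)) (mu g Q c y)) S
       = sm (Q + g + Sd) (sgn_deg (Q * g)) (mu g (Q + Sd) c (mu Q Sd y S))"
      using c y S by (simp add: mul_smul_left mul_assoc ac_simps)
    also have "mu g (Q + (g + Sd)) c (sm (Q + g + Sd) (sgn_deg (Q * g)) (mu g (Q + Sd) c (mu Q Sd y S)))
       = sm (g + (Q + (g + Sd))) (sgn_deg (Q * g)) (mu (g + g) (Q + Sd) (mu g g c c) (mu Q Sd y S))"
      using c y S by (simp add: mul_smul_right mul_assoc ac_simps)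
    also have "\<dots> = z0 (g + Q + (g + Sd))"
      using c y S g by (simp add: odd_sq_zero ac_simps)
    finally show ?thesis .
  qed
  have "mu (g + Q) (g + Sd) (ad (g + Q) x (mu g Q c y)) (ad (g + Sd) P (mu g Sd c S))
     = ad (g + Q + (g + Sd)) (ad (g + Q + (g + Sd)) (mu (g + Q) (g + Sd) x P) (mu (g + Q) (g + Sd) (mu g Q c y) P))
         (ad (g + Q + (g + Sd)) (mu (g + Q) (g + Sd) x (mu g Sd c S)) (mu (g + Q) (g + Sd) (mu g Q c y) (mu g Sd c S)))"
    using x cy P cS by (simp add: mul_add_left mul_add_right)
  also have "\<dots> = ad (g + Q + (g + Sd)) (mu (g + Q) (g + Sd) x P)
      (ad (g + Q + (g + Sd)) (mu g (g + Q + Sd) c (mu Q (g + Sd) y P)) (mu g (g + Q + Sd) c (mu (g + Q) Sd (sm (g + Q) (sgn_deg (g + Q)) x) S)))"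
    unfolding t2 t3 t4 using x c y P S
    by (subst add_zero_right) (auto intro!: add_assoc)
  also have "\<dots> = ad (g + Q + (g + Sd)) (mu (g + Q) (g + Sd) x P)
        (mu g (g + Q + Sd) c (ad (g + Q + Sd) (mu Q (g + Sd) y P) (mu (g + Q) Sd (sm (g + Q) (sgn_deg (g + Q)) x) S)))"
    using x c y P S by (simp add: mul_add_right ac_simps)
  finally show ?thesis .
qed


lemma smul_cancel: "u \<in> C k \<Longrightarrow> ad k (sm k c u) (sm k (-c) u) = z0 k"
  using smul_add_scalar[of u k c "-c"] by simp

lemma L2:
  assumes g: "odd g" and x: "x \<in> C (g + Q)" and y: "y \<in> C Q" and c: "c \<in> C g"
    and P: "P \<in> C (g + Sd)" and S: "S \<in> C Sd"
  shows "ad (g + Q + Sd) (mu Q (g + Sd) y (ad (g + Sd) P (mu g Sd c S)))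
           (mu (g + Q) Sd (sm (g + Q) (sgn_deg (g + Q)) (ad (g + Q) x (mu g Q c y))) S)
       = ad (g + Q + Sd) (mu Q (g + Sd) y P) (mu (g + Q) Sd (sm (g + Q) (sgn_deg (g + Q)) x) S)"
proof -
  define u where "u = mu (g + Q) Sd (mu g Q c y) S"
  have u: "u \<in> C (g + Q + Sd)" unfolding u_def using c y S by simp
  have e1: "mu Q (g + Sd) y (mu g Sd c S) = sm (g + Q + Sd) (sgn_deg Q) u"
  proof -
    have "mu Q (g + Sd) y (mu g Sd c S) = mu (Q + g) Sd (mu Q g y c) S"
      using c y S by (simp add: mul_assoc)
    also have "mu Q g y c = sm (Q + g) (sgn_deg (Q * g)) (mu g Q c y)"
      using c y by (simp add: mul_comm[of y Q c g "Q + g"])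
    finally show ?thesis unfolding u_def using c y S g
      by (simp add: mul_smul_left ac_simps sgn_deg_mult sgn_deg_def)
  qed
  have e2: "mu (g + Q) Sd (sm (g + Q) (sgn_deg (g + Q)) (mu g Q c y)) S = sm (g + Q + Sd) (- sgn_deg Q) u"
    unfolding u_def using c y S g by (simp add: mul_smul_left sgn_deg_add)
  have "ad (g + Q + Sd) (mu Q (g + Sd) y (ad (g + Sd) P (mu g Sd c S)))
           (mu (g + Q) Sd (sm (g + Q) (sgn_deg (g + Q)) (ad (g + Q) x (mu g Q c y))) S)
      = ad (g + Q + Sd) (ad (g + Q + Sd) (mu Q (g + Sd) y P) (mu Q (g + Sd) y (mu g Sd c S)))
          (ad (g + Q + Sd) (mu (g + Q) Sd (sm (g + Q) (sgn_deg (g + Q)) x) S)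
             (mu (g + Q) Sd (sm (g + Q) (sgn_deg (g + Q)) (mu g Q c y)) S))"
    using x y c P S by (simp add: mul_add_left mul_add_right smul_add ac_simps)
  also have "\<dots> = ad (g + Q + Sd) (ad (g + Q + Sd) (mu Q (g + Sd) y P) (sm (g + Q + Sd) (sgn_deg Q) u))
          (ad (g + Q + Sd) (mu (g + Q) Sd (sm (g + Q) (sgn_deg (g + Q)) x) S)
             (sm (g + Q + Sd) (- sgn_deg Q) u))" unfolding e1 e2 ..
  also have "\<dots> = ad (g + Q + Sd) (ad (g + Q + Sd) (mu Q (g + Sd) y P) (mu (g + Q) Sd (sm (g + Q) (sgn_deg (g + Q)) x) S))
          (ad (g + Q + Sd) (sm (g + Q + Sd) (sgn_deg Q) u) (sm (g + Q + Sd) (- sgn_deg Q) u))"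
    using x y P S u by (simp add: add_assoc add_left_commute ac_simps)
  also have "\<dots> = ad (g + Q + Sd) (mu Q (g + Sd) y P) (mu (g + Q) Sd (sm (g + Q) (sgn_deg (g + Q)) x) S)"
    using x y P S u by (simp add: smul_cancel ac_simps)
  finally show ?thesis .
qed

end


definition ed :: "int \<Rightarrow> (nat \<Rightarrow> int) \<Rightarrow> nat \<Rightarrow> int" where "ed p q j = p + q j - 1"
definition Pd :: "int \<Rightarrow> (nat \<Rightarrow> int) \<Rightarrow> nat list \<Rightarrow> int" where "Pd p q js = sum_list (map (ed p q) js)"
definition Sd :: "int \<Rightarrow> (nat \<Rightarrow> int) \<Rightarrow> nat list \<Rightarrow> int" where "Sd p q js = Pd p q js - (p - 1)"

lemma Pd_Nil[simp]: "Pd p q [] = 0" by (simp add: Pd_def)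
lemma Pd_Cons[simp]: "Pd p q (j # js) = ed p q j + Pd p q js" by (simp add: Pd_def)

primrec Pl :: "('a, 'b) dga_scheme \<Rightarrow> int \<Rightarrow> (nat \<Rightarrow> int) \<Rightarrow> (nat \<Rightarrow> 'a) \<Rightarrow> nat list \<Rightarrow> 'a" where
  "Pl X p q \<xi> [] = dunit X"
| "Pl X p q \<xi> (j # js) = dmul X (ed p q j) (Pd p q js) (\<xi> j) (Pl X p q \<xi> js)"

primrec Sl :: "('a, 'b) dga_scheme \<Rightarrow> int \<Rightarrow> (nat \<Rightarrow> int) \<Rightarrow> (nat \<Rightarrow> 'a) \<Rightarrow> (nat \<Rightarrow> 'a) \<Rightarrow> nat list \<Rightarrow> 'a" where
  "Sl X p q b \<xi> [] = dzero X (Sd p q [])"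
| "Sl X p q b \<xi> (j # js) = dadd X (Sd p q (j # js))
      (dmul X (q j) (Pd p q js) (b j) (Pl X p q \<xi> js))
      (dmul X (ed p q j) (Sd p q js) (dsmul X (ed p q j) (sgn_deg (ed p q j)) (\<xi> j)) (Sl X p q b \<xi> js))"

primrec Rl :: "('a, 'b) dga_scheme \<Rightarrow> int \<Rightarrow> (nat \<Rightarrow> int) \<Rightarrow> (nat \<Rightarrow> 'a) \<Rightarrow> (nat \<Rightarrow> 'a) \<Rightarrow> (nat \<Rightarrow> 'a) \<Rightarrow> nat list \<Rightarrow> 'a" where
  "Rl X p q \<xi>' \<gamma> \<xi> [] = dzero X (Sd p q [] - 1)"
| "Rl X p q \<xi>' \<gamma> \<xi> (j # js) = dadd X (Sd p q (j # js) - 1)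
      (dmul X (ed p q j) (Sd p q js - 1) (\<xi>' j) (Rl X p q \<xi>' \<gamma> \<xi> js))
      (dmul X (q j - 1) (Pd p q js) (\<gamma> j) (Pl X p q \<xi> js))"

context dgaL begin

lemma Pl_C: "(\<forall>j\<in>set js. \<xi> j \<in> C (ed p q j)) \<Longrightarrow> Pl A p q \<xi> js \<in> C (Pd p q js)"
  by (induction js) auto

lemma Sl_C: "(\<forall>j\<in>set js. \<xi> j \<in> C (ed p q j) \<and> b j \<in> C (q j)) \<Longrightarrow> Sl A p q b \<xi> js \<in> C (Sd p q js)"
proof (induction js)
  case Nil thus ?case by simp
next
  case (Cons j js)
  have "Pl A p q \<xi> js \<in> C (Pd p q js)" using Cons.prems by (intro Pl_C) auto
  thus ?case using Cons by (auto simp: Sd_def ed_def)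
qed

lemma L1g:
  assumes "odd g" "E = g + Q" "Pv = g + Sv" "D = E + Pv" "D2 = E + Sv"
    and "x \<in> C E" "y \<in> C Q" "c \<in> C g" "P \<in> C Pv" "S \<in> C Sv"
  shows "mu E Pv (ad E x (mu g Q c y)) (ad Pv P (mu g Sv c S))
    = ad D (mu E Pv x P) (mu g D2 c (ad D2 (mu Q Pv y P) (mu E Sv (sm E (sgn_deg E) x) S)))"
  using assms(6-) unfolding assms(2-5) by (rule L1[OF assms(1)])

lemma L2g:
  assumes "odd g" "E = g + Q" "Pv = g + Sv" "D2 = E + Sv"
    and "x \<in> C E" "y \<in> C Q" "c \<in> C g" "P \<in> C Pv" "S \<in> C Sv"
  shows "ad D2 (mu Q Pv y (ad Pv P (mu g Sv c S)))
           (mu E Sv (sm E (sgn_deg E) (ad E x (mu g Q c y))) S)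
       = ad D2 (mu Q Pv y P) (mu E Sv (sm E (sgn_deg E) x) S)"
  using assms(5-) unfolding assms(2-4) by (rule L2[OF assms(1)])

lemma a_change:
  assumes p: "even p" and c: "c \<in> C (p - 1)"
    and xb: "\<forall>j\<in>set js. \<xi> j \<in> C (ed p q j) \<and> b j \<in> C (q j)"
  shows "Pl A p q (\<lambda>j. ad (ed p q j) (\<xi> j) (mu (p - 1) (q j) c (b j))) js
           = ad (Pd p q js) (Pl A p q \<xi> js) (mu (p - 1) (Sd p q js) c (Sl A p q b \<xi> js))
       \<and> Sl A p q b (\<lambda>j. ad (ed p q j) (\<xi> j) (mu (p - 1) (q j) c (b j))) js = Sl A p q b \<xi> js"
  using xb
proof (induction js)
  case Nil
  have "mu (p - 1) (Sd p q []) c (z0 (Sd p q [])) = z0 0"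
    using c by (simp add: Sd_def)
  thus ?case by simp
next
  case (Cons j js)
  let ?\<xi>' = "\<lambda>j. ad (ed p q j) (\<xi> j) (mu (p - 1) (q j) c (b j))"
  have IH: "Pl A p q ?\<xi>' js = ad (Pd p q js) (Pl A p q \<xi> js) (mu (p - 1) (Sd p q js) c (Sl A p q b \<xi> js))"
      "Sl A p q b ?\<xi>' js = Sl A p q b \<xi> js" using Cons by auto
  have xj: "\<xi> j \<in> C (ed p q j)" "b j \<in> C (q j)" using Cons.prems by auto
  have PS: "Pl A p q \<xi> js \<in> C (Pd p q js)" "Sl A p q b \<xi> js \<in> C (Sd p q js)"
    using Cons.prems by (auto intro!: Pl_C Sl_C)
  have g: "odd (p - 1)" using p by simp
  show ?case
  proof
    show "Pl A p q ?\<xi>' (j # js) = ad (Pd p q (j # js)) (Pl A p q \<xi> (j # js))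
        (mu (p - 1) (Sd p q (j # js)) c (Sl A p q b \<xi> (j # js)))"
      unfolding Pl.simps Sl.simps IH(1)
      by (rule L1g[OF g _ _ _ _ xj(1) xj(2) c PS]) (auto simp: ed_def Sd_def)
    show "Sl A p q b ?\<xi>' (j # js) = Sl A p q b \<xi> (j # js)"
      unfolding Sl.simps IH
      by (rule L2g[OF g _ _ _ xj(1) xj(2) c PS]) (auto simp: ed_def Sd_def)
  qed
qed


lemma L3:
  assumes p: "even p" and a: "a \<in> C p" and x: "x \<in> C (p - 1 + Q)" and y: "y \<in> C Q"
    and P: "P \<in> C (p - 1 + Sv)" and S: "S \<in> C Sv"
    and dx: "dd (p - 1 + Q) x = mu p Q a y" and dP: "dd (p - 1 + Sv) P = mu p Sv a S"
  shows "dd (p - 1 + Q + (p - 1 + Sv)) (mu (p - 1 + Q) (p - 1 + Sv) x P)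
     = mu p (p - 1 + Q + Sv) a (ad (p - 1 + Q + Sv) (mu Q (p - 1 + Sv) y P)
          (mu (p - 1 + Q) Sv (sm (p - 1 + Q) (sgn_deg (p - 1 + Q)) x) S))"
proof -
  let ?E = "p - 1 + Q" and ?D2 = "p - 1 + Q + Sv"
  have "dd (p - 1 + Q + (p - 1 + Sv)) (mu (p - 1 + Q) (p - 1 + Sv) x P)
     = ad (p + ?D2) (mu (?E + 1) (p - 1 + Sv) (dd ?E x) P)
          (sm (p + ?D2) (sgn_deg ?E) (mu ?E (p - 1 + Sv + 1) x (dd (p - 1 + Sv) P)))"
    using x P by (rule leibniz) auto
  also have "mu (?E + 1) (p - 1 + Sv) (dd ?E x) P = mu p ?D2 a (mu Q (p - 1 + Sv) y P)"
    unfolding dx using a y P by (rule mul_assoc) auto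
  also have "mu ?E (p - 1 + Sv + 1) x (dd (p - 1 + Sv) P) = mu (?E + p) Sv (mu ?E p x a) S"
    unfolding dP using x a S by (rule mul_assoc[symmetric]) auto
  also have "mu ?E p x a = sm (?E + p) (sgn_deg (?E * p)) (mu p ?E a x)"
    using x a by (rule mul_comm) auto
  also have "sgn_deg (?E * p) = 1" using p by (simp add: sgn_deg_mult)
  also have "sm (?E + p) 1 (mu p ?E a x) = mu p ?E a x" using a x by simp
  also have "mu (?E + p) Sv (mu p ?E a x) S = mu p ?D2 a (mu ?E Sv x S)"
    using a x S by (rule mul_assoc) auto
  also have "sm (p + ?D2) (sgn_deg ?E) (mu p ?D2 a (mu ?E Sv x S))
      = mu p ?D2 a (mu ?E Sv (sm ?E (sgn_deg ?E) x) S)"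
    using a x S by (simp add: mul_smul_left mul_smul_right mul_C0)
  also have "ad (p + ?D2) (mu p ?D2 a (mu Q (p - 1 + Sv) y P)) (mu p ?D2 a (mu ?E Sv (sm ?E (sgn_deg ?E) x) S))
     = mu p ?D2 a (ad ?D2 (mu Q (p - 1 + Sv) y P) (mu ?E Sv (sm ?E (sgn_deg ?E) x) S))"
    using a x y P S by (subst mul_add_rightD) auto
  finally show ?thesis .
qed


lemma L4:
  assumes p: "even p" and a: "a \<in> C p" and x: "x \<in> C (p - 1 + Q)" and y: "y \<in> C Q"
    and P: "P \<in> C (p - 1 + Sv)" and S: "S \<in> C Sv"
    and dx: "dd (p - 1 + Q) x = mu p Q a y" and dP: "dd (p - 1 + Sv) P = mu p Sv a S"
    and dy: "dd Q y = z0 (Q + 1)" and dS: "dd Sv S = z0 (Sv + 1)"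
  shows "dd (p - 1 + Q + Sv) (ad (p - 1 + Q + Sv) (mu Q (p - 1 + Sv) y P)
          (mu (p - 1 + Q) Sv (sm (p - 1 + Q) (sgn_deg (p - 1 + Q)) x) S)) = z0 (p - 1 + Q + Sv + 1)"
proof -
  let ?E = "p - 1 + Q" and ?D = "p - 1 + Q + Sv"
  define w where "w = mu (p + Q) Sv (mu p Q a y) S"
  have w: "w \<in> C (?D + 1)" unfolding w_def using a y S by auto
  have sx: "sm ?E (sgn_deg ?E) x \<in> C ?E" using x by simp
  have "dd ?D (ad ?D (mu Q (p - 1 + Sv) y P) (mu ?E Sv (sm ?E (sgn_deg ?E) x) S))
     = ad (?D + 1) (dd ?D (mu Q (p - 1 + Sv) y P)) (dd ?D (mu ?E Sv (sm ?E (sgn_deg ?E) x) S))"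
    using y P sx S by (intro d_addD) auto
  also have "dd ?D (mu Q (p - 1 + Sv) y P) = ad (?D + 1) (mu (Q + 1) (p - 1 + Sv) (dd Q y) P)
       (sm (?D + 1) (sgn_deg Q) (mu Q (p - 1 + Sv + 1) y (dd (p - 1 + Sv) P)))"
    using y P by (rule leibniz) auto
  also have "mu (Q + 1) (p - 1 + Sv) (dd Q y) P = z0 (?D + 1)"
    unfolding dy using P by (simp add: ac_simps)
  also have "mu Q (p - 1 + Sv + 1) y (dd (p - 1 + Sv) P) = mu (Q + p) Sv (mu Q p y a) S"
    unfolding dP using y a S by (rule mul_assoc[symmetric]) auto
  also have "mu Q p y a = sm (Q + p) (sgn_deg (Q * p)) (mu p Q a y)"
    using y a by (rule mul_comm) auto
  also have "sgn_deg (Q * p) = 1" using p by (simp add: sgn_deg_mult)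
  also have "sm (Q + p) 1 (mu p Q a y) = mu p Q a y" using a y by simp
  also have "mu (Q + p) Sv (mu p Q a y) S = w" unfolding w_def by (simp add: ac_simps)
  also have "dd ?D (mu ?E Sv (sm ?E (sgn_deg ?E) x) S) = ad (?D + 1) (mu (?E + 1) Sv (dd ?E (sm ?E (sgn_deg ?E) x)) S)
       (sm (?D + 1) (sgn_deg ?E) (mu ?E (Sv + 1) (sm ?E (sgn_deg ?E) x) (dd Sv S)))"
    using sx S by (rule leibniz) auto
  also have "mu ?E (Sv + 1) (sm ?E (sgn_deg ?E) x) (dd Sv S) = z0 (?D + 1)"
    unfolding dS using sx by (simp add: ac_simps)
  also have "dd ?E (sm ?E (sgn_deg ?E) x) = sm (?E + 1) (sgn_deg ?E) (mu p Q a y)"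
    unfolding dx[symmetric] using x by (rule d_smulD) simp
  also have "mu (?E + 1) Sv (sm (?E + 1) (sgn_deg ?E) (mu p Q a y)) S = sm (?D + 1) (sgn_deg ?E) w"
    unfolding w_def using a y S by (subst mul_smul_leftD) (auto simp: ac_simps)
  finally have eq: "dd ?D (ad ?D (mu Q (p - 1 + Sv) y P) (mu ?E Sv (sm ?E (sgn_deg ?E) x) S)) =
    ad (?D + 1) (ad (?D + 1) (z0 (?D + 1)) (sm (?D + 1) (sgn_deg Q) w))
     (ad (?D + 1) (sm (?D + 1) (sgn_deg ?E) w) (sm (?D + 1) (sgn_deg ?E) (z0 (?D + 1))))" .
  have sE: "sgn_deg ?E = - sgn_deg Q" using p by (simp add: sgn_deg_add)
  show ?thesis unfolding eq unfolding sE using w by (simp add: smul_cancel)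
qed


lemma L3g:
  assumes "E = p - 1 + Q" "Pv = p - 1 + Sv" "D = E + Pv" "D2 = E + Sv"
    and "even p" "a \<in> C p" "x \<in> C E" "y \<in> C Q" "P \<in> C Pv" "S \<in> C Sv"
    "dd E x = mu p Q a y" "dd Pv P = mu p Sv a S"
  shows "dd D (mu E Pv x P) = mu p D2 a (ad D2 (mu Q Pv y P) (mu E Sv (sm E (sgn_deg E) x) S))"
  using assms(5-) unfolding assms(1-4) by (rule L3)

lemma L4g:
  assumes "E = p - 1 + Q" "Pv = p - 1 + Sv" "D2 = E + Sv" "D3 = D2 + 1"
    and "even p" "a \<in> C p" "x \<in> C E" "y \<in> C Q" "P \<in> C Pv" "S \<in> C Sv"
    "dd E x = mu p Q a y" "dd Pv P = mu p Sv a S" "dd Q y = z0 (Q + 1)" "dd Sv S = z0 (Sv + 1)"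
  shows "dd D2 (ad D2 (mu Q Pv y P) (mu E Sv (sm E (sgn_deg E) x) S)) = z0 D3"
  using assms(5-) unfolding assms(1-4) by (rule L4)

lemma dP_dS:
  assumes p: "even p" and a: "a \<in> C p"
    and h: "\<forall>j\<in>set js. \<xi> j \<in> C (ed p q j) \<and> b j \<in> C (q j) \<and>
        dd (ed p q j) (\<xi> j) = mu p (q j) a (b j) \<and> dd (q j) (b j) = z0 (q j + 1)"
  shows "dd (Pd p q js) (Pl A p q \<xi> js) = mu p (Sd p q js) a (Sl A p q b \<xi> js)
       \<and> dd (Sd p q js) (Sl A p q b \<xi> js) = z0 (Sd p q js + 1)"
  using h
proof (induction js)
  case Nil
  have "mu p (Sd p q []) a (z0 (Sd p q [])) = z0 1" using a by (simp add: Sd_def)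
  thus ?case by simp
next
  case (Cons j js)
  have IH: "dd (Pd p q js) (Pl A p q \<xi> js) = mu p (Sd p q js) a (Sl A p q b \<xi> js)"
      "dd (Sd p q js) (Sl A p q b \<xi> js) = z0 (Sd p q js + 1)" using Cons by auto
  have xj: "\<xi> j \<in> C (ed p q j)" "b j \<in> C (q j)" "dd (ed p q j) (\<xi> j) = mu p (q j) a (b j)"
     "dd (q j) (b j) = z0 (q j + 1)" using Cons.prems by auto
  have PS: "Pl A p q \<xi> js \<in> C (Pd p q js)" "Sl A p q b \<xi> js \<in> C (Sd p q js)"
    using Cons.prems by (auto intro!: Pl_C Sl_C)
  show ?case
  proof
    show "dd (Pd p q (j # js)) (Pl A p q \<xi> (j # js)) = mu p (Sd p q (j # js)) a (Sl A p q b \<xi> (j # js))"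
      unfolding Pl.simps Sl.simps
      by (rule L3g[OF _ _ _ _ p a xj(1) xj(2) PS xj(3) IH(1)]) (auto simp: ed_def Sd_def)
    show "dd (Sd p q (j # js)) (Sl A p q b \<xi> (j # js)) = z0 (Sd p q (j # js) + 1)"
      unfolding Sl.simps
      by (rule L4g[OF _ _ _ _ p a xj(1) xj(2) PS xj(3) IH(1) xj(4) IH(2)]) (auto simp: ed_def Sd_def)
  qed
qed


lemma comm_even: "even p \<Longrightarrow> a \<in> C p \<Longrightarrow> x \<in> C E \<Longrightarrow> m = E + p \<Longrightarrow> mu E p x a = mu p E a x"
proof -
  assume p: "even p" and a: "a \<in> C p" and x: "x \<in> C E" and m: "m = E + p"
  have "mu E p x a = sm (E + p) (sgn_deg (E * p)) (mu p E a x)" using x a by (rule mul_comm) auto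
  also have "sgn_deg (E * p) = 1" using p by (simp add: sgn_deg_mult)
  finally show ?thesis using a x by simp
qed

lemma L5a:
  assumes p: "even p" and a: "a \<in> C p" and x': "x' \<in> C (p - 1 + Q)" and \<gamma>: "\<gamma> \<in> C (Q - 1)"
    and P': "P' \<in> C (p - 1 + Sv)" and R: "R \<in> C (Sv - 1)"
    and hP: "P = ad (p - 1 + Sv) P' (mu p (Sv - 1) a R)"
  shows "mu (p - 1 + Q) (p - 1 + Sv) (ad (p - 1 + Q) x' (mu p (Q - 1) a \<gamma>)) P
     = ad (p - 1 + Q + (p - 1 + Sv)) (mu (p - 1 + Q) (p - 1 + Sv) x' P')
        (mu p (p - 1 + Q + Sv - 1) a (ad (p - 1 + Q + Sv - 1) (mu (p - 1 + Q) (Sv - 1) x' R) (mu (Q - 1) (p - 1 + Sv) \<gamma> P)))"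
proof -
  let ?E = "p - 1 + Q" and ?Pv = "p - 1 + Sv" and ?D = "p - 1 + Q + (p - 1 + Sv)" and ?R = "p - 1 + Q + Sv - 1"
  have aR: "mu p (Sv - 1) a R \<in> C ?Pv" using a R by auto
  have P: "P \<in> C ?Pv" unfolding hP using P' aR by simp
  have a\<gamma>: "mu p (Q - 1) a \<gamma> \<in> C ?E" using a \<gamma> by auto
  have "mu ?E ?Pv (ad ?E x' (mu p (Q - 1) a \<gamma>)) P = ad ?D (mu ?E ?Pv x' P) (mu ?E ?Pv (mu p (Q - 1) a \<gamma>) P)"
    using x' a\<gamma> P by (rule mul_add_leftD) simp
  also have "mu ?E ?Pv x' P = ad ?D (mu ?E ?Pv x' P') (mu ?E ?Pv x' (mu p (Sv - 1) a R))"
    unfolding hP using x' P' aR by (rule mul_add_rightD) simp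
  also have "mu ?E ?Pv x' (mu p (Sv - 1) a R) = mu (?E + p) (Sv - 1) (mu ?E p x' a) R"
    using x' a R by (rule mul_assoc[symmetric]) auto
  also have "mu ?E p x' a = mu p ?E a x'" using p a x' by (rule comm_even) simp
  also have "mu (?E + p) (Sv - 1) (mu p ?E a x') R = mu p ?R a (mu ?E (Sv - 1) x' R)"
    using a x' R by (rule mul_assoc) auto
  also have "mu ?E ?Pv (mu p (Q - 1) a \<gamma>) P = mu p ?R a (mu (Q - 1) ?Pv \<gamma> P)"
    using a \<gamma> P by (rule mul_assoc) auto
  also have "ad ?D (ad ?D (mu ?E ?Pv x' P') (mu p ?R a (mu ?E (Sv - 1) x' R))) (mu p ?R a (mu (Q - 1) ?Pv \<gamma> P))
     = ad ?D (mu ?E ?Pv x' P') (ad ?D (mu p ?R a (mu ?E (Sv - 1) x' R)) (mu p ?R a (mu (Q - 1) ?Pv \<gamma> P)))"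
    using x' P' a R \<gamma> P by (intro add_assoc) auto
  also have "ad ?D (mu p ?R a (mu ?E (Sv - 1) x' R)) (mu p ?R a (mu (Q - 1) ?Pv \<gamma> P))
     = mu p ?R a (ad ?R (mu ?E (Sv - 1) x' R) (mu (Q - 1) ?Pv \<gamma> P))"
    using a x' R \<gamma> P by (subst mul_add_rightD[where m = ?D]) auto
  finally show ?thesis .
qed


lemma ac6: "u1 \<in> C k \<Longrightarrow> u2 \<in> C k \<Longrightarrow> u3 \<in> C k \<Longrightarrow> u4 \<in> C k \<Longrightarrow> u5 \<in> C k \<Longrightarrow> u6 \<in> C k \<Longrightarrow>
  ad k (ad k (ad k u1 u2) u3) (ad k (ad k u4 u5) u6) = ad k (ad k u1 u4) (ad k (ad k u2 u5) (ad k u3 u6))"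
  by (simp add: add_assoc add_comm add_left_commute)

lemma sgn_shift: "even p \<Longrightarrow> sgn_deg (p - 1 + Q) = sgn_deg (Q - 1)"
  by (simp add: sgn_deg_def)


lemma L5b:
  assumes p: "even p" and a: "a \<in> C p" and x': "x' \<in> C (p - 1 + Q)" and y': "y' \<in> C Q"
    and \<gamma>: "\<gamma> \<in> C (Q - 1)"
    and P': "P' \<in> C (p - 1 + Sv)" and S': "S' \<in> C Sv" and R: "R \<in> C (Sv - 1)"
    and dx': "dd (p - 1 + Q) x' = mu p Q a y'"
    and hP: "P = ad (p - 1 + Sv) P' (mu p (Sv - 1) a R)"
    and hS: "S = ad Sv S' (dd (Sv - 1) R)"
    and dP: "dd (p - 1 + Sv) P = mu p Sv a S"
  shows "ad (p - 1 + Q + Sv) (mu Q (p - 1 + Sv) (ad Q y' (dd (Q - 1) \<gamma>)) P)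
           (mu (p - 1 + Q) Sv (sm (p - 1 + Q) (sgn_deg (p - 1 + Q)) (ad (p - 1 + Q) x' (mu p (Q - 1) a \<gamma>))) S)
     = ad (p - 1 + Q + Sv) (ad (p - 1 + Q + Sv) (mu Q (p - 1 + Sv) y' P') (mu (p - 1 + Q) Sv (sm (p - 1 + Q) (sgn_deg (p - 1 + Q)) x') S'))
         (dd (p - 1 + Q + Sv - 1) (ad (p - 1 + Q + Sv - 1) (mu (p - 1 + Q) (Sv - 1) x' R) (mu (Q - 1) (p - 1 + Sv) \<gamma> P)))"
proof -
  let ?E = "p - 1 + Q" and ?Pv = "p - 1 + Sv" and ?D = "p - 1 + Q + Sv" and ?R = "p - 1 + Q + Sv - 1"
  let ?s = "sgn_deg ?E"
  have aR: "mu p (Sv - 1) a R \<in> C ?Pv" using a R by auto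
  have dR: "dd (Sv - 1) R \<in> C Sv" using R by auto
  have P: "P \<in> C ?Pv" unfolding hP using P' aR by simp
  have S: "S \<in> C Sv" unfolding hS using S' dR by simp
  have a\<gamma>: "mu p (Q - 1) a \<gamma> \<in> C ?E" using a \<gamma> by auto
  have d\<gamma>: "dd (Q - 1) \<gamma> \<in> C Q" using \<gamma> by auto
  have sx': "sm ?E ?s x' \<in> C ?E" using x' by simp
  have sa\<gamma>: "sm ?E ?s (mu p (Q - 1) a \<gamma>) \<in> C ?E" using a\<gamma> by simp
  define u1 where "u1 = mu Q ?Pv y' P'"
  define u2 where "u2 = mu Q ?Pv y' (mu p (Sv - 1) a R)"
  define u3 where "u3 = mu Q ?Pv (dd (Q - 1) \<gamma>) P"
  define u4 where "u4 = mu ?E Sv (sm ?E ?s x') S'"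
  define u5 where "u5 = mu ?E Sv (sm ?E ?s x') (dd (Sv - 1) R)"
  define u6 where "u6 = mu ?E Sv (sm ?E ?s (mu p (Q - 1) a \<gamma>)) S"
  have us: "u1 \<in> C ?D" "u2 \<in> C ?D" "u3 \<in> C ?D" "u4 \<in> C ?D" "u5 \<in> C ?D" "u6 \<in> C ?D"
    unfolding u1_def u2_def u3_def u4_def u5_def u6_def
    using y' P' aR d\<gamma> P sx' S' dR sa\<gamma> S by auto
  have L: "ad ?D (mu Q ?Pv (ad Q y' (dd (Q - 1) \<gamma>)) P) (mu ?E Sv (sm ?E ?s (ad ?E x' (mu p (Q - 1) a \<gamma>))) S)
      = ad ?D (ad ?D (ad ?D u1 u2) u3) (ad ?D (ad ?D u4 u5) u6)"
  proof -
    have "mu Q ?Pv (ad Q y' (dd (Q - 1) \<gamma>)) P = ad ?D (mu Q ?Pv y' P) u3"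
      unfolding u3_def using y' d\<gamma> P by (rule mul_add_leftD) simp
    also have "mu Q ?Pv y' P = ad ?D u1 u2"
      unfolding hP u1_def u2_def using y' P' aR by (rule mul_add_rightD) simp
    finally have 1: "mu Q ?Pv (ad Q y' (dd (Q - 1) \<gamma>)) P = ad ?D (ad ?D u1 u2) u3" .
    have "mu ?E Sv (sm ?E ?s (ad ?E x' (mu p (Q - 1) a \<gamma>))) S
        = mu ?E Sv (ad ?E (sm ?E ?s x') (sm ?E ?s (mu p (Q - 1) a \<gamma>))) S"
      using x' a\<gamma> by (simp add: smul_add)
    also have "\<dots> = ad ?D (mu ?E Sv (sm ?E ?s x') S) u6"
      unfolding u6_def using sx' sa\<gamma> S by (rule mul_add_leftD) simp
    also have "mu ?E Sv (sm ?E ?s x') S = ad ?D u4 u5"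
      unfolding hS u4_def u5_def using sx' S' dR by (rule mul_add_rightD) simp
    finally have 2: "mu ?E Sv (sm ?E ?s (ad ?E x' (mu p (Q - 1) a \<gamma>))) S = ad ?D (ad ?D u4 u5) u6" .
    show ?thesis unfolding 1 2 ..
  qed
  have F3: "dd ?R (mu ?E (Sv - 1) x' R) = ad ?D u2 u5"
  proof -
    have "dd ?R (mu ?E (Sv - 1) x' R) = ad ?D (mu (?E + 1) (Sv - 1) (dd ?E x') R)
        (sm ?D ?s (mu ?E (Sv - 1 + 1) x' (dd (Sv - 1) R)))"
      using x' R by (rule leibniz) auto
    also have "sm ?D ?s (mu ?E (Sv - 1 + 1) x' (dd (Sv - 1) R)) = u5"
      unfolding u5_def using x' dR by (simp add: mul_smul_left)
    also have "mu (?E + 1) (Sv - 1) (dd ?E x') R = mu (p + Q) (Sv - 1) (mu p Q a y') R"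
      unfolding dx' by (simp add: ac_simps)
    also have "\<dots> = mu (Q + p) (Sv - 1) (mu Q p y' a) R"
      using comm_even[OF p a y', of "Q + p"] by (simp add: ac_simps)
    also have "\<dots> = u2" unfolding u2_def using y' a R by (rule mul_assoc) auto
    finally show ?thesis .
  qed
  have F4: "dd ?R (mu (Q - 1) ?Pv \<gamma> P) = ad ?D u3 u6"
  proof -
    have "dd ?R (mu (Q - 1) ?Pv \<gamma> P) = ad ?D (mu (Q - 1 + 1) ?Pv (dd (Q - 1) \<gamma>) P)
        (sm ?D (sgn_deg (Q - 1)) (mu (Q - 1) (?Pv + 1) \<gamma> (dd ?Pv P)))"
      using \<gamma> P by (rule leibniz) auto
    also have "mu (Q - 1 + 1) ?Pv (dd (Q - 1) \<gamma>) P = u3" unfolding u3_def by simp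
    also have "sgn_deg (Q - 1) = ?s" using p by (simp add: sgn_shift)
    also have "mu (Q - 1) (?Pv + 1) \<gamma> (dd ?Pv P) = mu (Q - 1 + p) Sv (mu (Q - 1) p \<gamma> a) S"
      unfolding dP using \<gamma> a S by (rule mul_assoc[symmetric]) auto
    also have "mu (Q - 1) p \<gamma> a = mu p (Q - 1) a \<gamma>" using p a \<gamma> by (rule comm_even) simp
    also have "Q - 1 + p = ?E" by simp
    also have "sm ?D ?s (mu ?E Sv (mu p (Q - 1) a \<gamma>) S) = u6"
      unfolding u6_def using a\<gamma> S by (simp add: mul_smul_left)
    finally show ?thesis .
  qed
  have "dd ?R (ad ?R (mu ?E (Sv - 1) x' R) (mu (Q - 1) ?Pv \<gamma> P))
      = ad ?D (dd ?R (mu ?E (Sv - 1) x' R)) (dd ?R (mu (Q - 1) ?Pv \<gamma> P))"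
    using x' R \<gamma> P by (intro d_addD) auto
  hence Rr: "dd ?R (ad ?R (mu ?E (Sv - 1) x' R) (mu (Q - 1) ?Pv \<gamma> P)) = ad ?D (ad ?D u2 u5) (ad ?D u3 u6)"
    unfolding F3 F4 .
  show ?thesis unfolding L Rr u1_def[symmetric] u4_def[symmetric] using us by (rule ac6)
qed


lemma L5ag:
  assumes "E = p - 1 + Q" "Pv = p - 1 + Sv" "D = E + Pv" "Rd = E + Sv - 1"
    and "even p" "a \<in> C p" "x' \<in> C E" "\<gamma> \<in> C (Q - 1)" "P' \<in> C Pv" "R \<in> C (Sv - 1)"
    "P = ad Pv P' (mu p (Sv - 1) a R)"
  shows "mu E Pv (ad E x' (mu p (Q - 1) a \<gamma>)) P
     = ad D (mu E Pv x' P') (mu p Rd a (ad Rd (mu E (Sv - 1) x' R) (mu (Q - 1) Pv \<gamma> P)))"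
  using assms(5-) unfolding assms(1-4) by (rule L5a)

lemma L5bg:
  assumes "E = p - 1 + Q" "Pv = p - 1 + Sv" "D2 = E + Sv" "Rd = E + Sv - 1"
    and "even p" "a \<in> C p" "x' \<in> C E" "y' \<in> C Q" "\<gamma> \<in> C (Q - 1)"
    "P' \<in> C Pv" "S' \<in> C Sv" "R \<in> C (Sv - 1)"
    "dd E x' = mu p Q a y'"
    "P = ad Pv P' (mu p (Sv - 1) a R)"
    "S = ad Sv S' (dd (Sv - 1) R)"
    "dd Pv P = mu p Sv a S"
  shows "ad D2 (mu Q Pv (ad Q y' (dd (Q - 1) \<gamma>)) P)
           (mu E Sv (sm E (sgn_deg E) (ad E x' (mu p (Q - 1) a \<gamma>))) S)
     = ad D2 (ad D2 (mu Q Pv y' P') (mu E Sv (sm E (sgn_deg E) x') S'))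
         (dd Rd (ad Rd (mu E (Sv - 1) x' R) (mu (Q - 1) Pv \<gamma> P)))"
  using assms(5-) unfolding assms(1-4) by (rule L5b)

lemma b_change:
  assumes p: "even p" and a: "a \<in> C p"
    and h: "\<forall>j\<in>set js. \<xi>' j \<in> C (ed p q j) \<and> b' j \<in> C (q j) \<and> \<gamma> j \<in> C (q j - 1) \<and>
        dd (ed p q j) (\<xi>' j) = mu p (q j) a (b' j) \<and>
        \<xi> j = ad (ed p q j) (\<xi>' j) (mu p (q j - 1) a (\<gamma> j)) \<and>
        b j = ad (q j) (b' j) (dd (q j - 1) (\<gamma> j)) \<and>
        dd (ed p q j) (\<xi> j) = mu p (q j) a (b j) \<and> dd (q j) (b j) = z0 (q j + 1)"
  shows "Rl A p q \<xi>' \<gamma> \<xi> js \<in> C (Sd p q js - 1)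
       \<and> Pl A p q \<xi> js = ad (Pd p q js) (Pl A p q \<xi>' js) (mu p (Sd p q js - 1) a (Rl A p q \<xi>' \<gamma> \<xi> js))
       \<and> Sl A p q b \<xi> js = ad (Sd p q js) (Sl A p q b' \<xi>' js) (dd (Sd p q js - 1) (Rl A p q \<xi>' \<gamma> \<xi> js))"
  using h
proof (induction js)
  case Nil
  have "mu p (Sd p q [] - 1) a (z0 (Sd p q [] - 1)) = z0 0" using a by (simp add: Sd_def)
  moreover have "dd (Sd p q [] - 1) (z0 (Sd p q [] - 1)) = z0 (Sd p q [])" by simp
  ultimately show ?case by simp
next
  case (Cons j js)
  have IH: "Rl A p q \<xi>' \<gamma> \<xi> js \<in> C (Sd p q js - 1)"
    "Pl A p q \<xi> js = ad (Pd p q js) (Pl A p q \<xi>' js) (mu p (Sd p q js - 1) a (Rl A p q \<xi>' \<gamma> \<xi> js))"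
    "Sl A p q b \<xi> js = ad (Sd p q js) (Sl A p q b' \<xi>' js) (dd (Sd p q js - 1) (Rl A p q \<xi>' \<gamma> \<xi> js))"
    using Cons.IH Cons.prems by (meson list.set_intros(2))+
  have xj: "\<xi>' j \<in> C (ed p q j)" "b' j \<in> C (q j)" "\<gamma> j \<in> C (q j - 1)"
    "dd (ed p q j) (\<xi>' j) = mu p (q j) a (b' j)"
    "\<xi> j = ad (ed p q j) (\<xi>' j) (mu p (q j - 1) a (\<gamma> j))"
    "b j = ad (q j) (b' j) (dd (q j - 1) (\<gamma> j))" using Cons.prems by auto
  have hn: "\<forall>j\<in>set js. \<xi> j \<in> C (ed p q j) \<and> b j \<in> C (q j) \<and>
        dd (ed p q j) (\<xi> j) = mu p (q j) a (b j) \<and> dd (q j) (b j) = z0 (q j + 1)"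
  proof
    fix j' assume j': "j' \<in> set js"
    have H: "\<xi>' j' \<in> C (ed p q j') \<and> b' j' \<in> C (q j') \<and> \<gamma> j' \<in> C (q j' - 1) \<and>
        \<xi> j' = ad (ed p q j') (\<xi>' j') (mu p (q j' - 1) a (\<gamma> j')) \<and>
        b j' = ad (q j') (b' j') (dd (q j' - 1) (\<gamma> j')) \<and>
        dd (ed p q j') (\<xi> j') = mu p (q j') a (b j') \<and> dd (q j') (b j') = z0 (q j' + 1)"
      using Cons.prems j' by (meson list.set_intros(2))
    have "\<xi> j' \<in> C (ed p q j')" using H a by (auto simp: ed_def)
    moreover have "b j' \<in> C (q j')" using H by auto
    ultimately show "\<xi> j' \<in> C (ed p q j') \<and> b j' \<in> C (q j') \<and>
        dd (ed p q j') (\<xi> j') = mu p (q j') a (b j') \<and> dd (q j') (b j') = z0 (q j' + 1)"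
      using H by blast
  qed
  have PS: "Pl A p q \<xi>' js \<in> C (Pd p q js)" "Sl A p q b' \<xi>' js \<in> C (Sd p q js)"
    using Cons.prems by (auto intro!: Pl_C Sl_C)
  have PSn: "Pl A p q \<xi> js \<in> C (Pd p q js)"
    using hn by (auto intro!: Pl_C)
  have dPn: "dd (Pd p q js) (Pl A p q \<xi> js) = mu p (Sd p q js) a (Sl A p q b \<xi> js)"
    using dP_dS[OF p a hn] by simp
  show ?case
  proof (intro conjI)
    show "Rl A p q \<xi>' \<gamma> \<xi> (j # js) \<in> C (Sd p q (j # js) - 1)"
      using xj IH(1) PSn by (auto simp: Sd_def ed_def)
    show "Pl A p q \<xi> (j # js) = ad (Pd p q (j # js)) (Pl A p q \<xi>' (j # js))
        (mu p (Sd p q (j # js) - 1) a (Rl A p q \<xi>' \<gamma> \<xi> (j # js)))"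
      unfolding Pl.simps Rl.simps xj(5)
      by (rule L5ag[OF _ _ _ _ p a xj(1) xj(3) PS(1) IH(1) IH(2)]) (auto simp: ed_def Sd_def)
    show "Sl A p q b \<xi> (j # js) = ad (Sd p q (j # js)) (Sl A p q b' \<xi>' (j # js))
        (dd (Sd p q (j # js) - 1) (Rl A p q \<xi>' \<gamma> \<xi> (j # js)))"
      unfolding Sl.simps Rl.simps xj(5) xj(6)
      by (rule L5bg[OF _ _ _ _ p a xj(1) xj(2) xj(3) PS IH(1) xj(4) IH(2) IH(3) dPn]) (auto simp: ed_def Sd_def)
  qed
qed

end


lemma ed_fun: "ed p q = (\<lambda>j. p + q j - 1)" by (rule ext) (simp add: ed_def)

lemma prodl_fst: "fst (prodl X xs) = sum_list (map fst xs)"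
  by (induction xs) auto

definition Tm :: "('a, 'b) dga_scheme \<Rightarrow> int \<Rightarrow> (nat \<Rightarrow> int) \<Rightarrow> (nat \<Rightarrow> 'a) \<Rightarrow> (nat \<Rightarrow> 'a) \<Rightarrow> nat list \<Rightarrow> nat \<Rightarrow> 'a" where
  "Tm X p q b \<xi> js k = snd (prodl X (map (\<lambda>j. (ed p q j, bar X (ed p q j) (\<xi> j))) (take k js)
      @ [(q (js ! k), b (js ! k))] @ map (\<lambda>j. (ed p q j, \<xi> j)) (drop (Suc k) js)))"

lemma Tm_deg: "k < length js \<Longrightarrow> sum_list (map fst (map (\<lambda>j. (ed p q j, bar X (ed p q j) (\<xi> j))) (take k js)
      @ [(q (js ! k), b (js ! k))] @ map (\<lambda>j. (ed p q j, \<xi> j)) (drop (Suc k) js))) = Sd p q js"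
proof -
  assume k: "k < length js"
  have "Pd p q js = sum_list (map (ed p q) (take k js @ js ! k # drop (Suc k) js))"
    unfolding Pd_def using id_take_nth_drop[OF k] by simp
  thus ?thesis by (simp add: Sd_def o_def ed_fun ed_def)
qed

lemma prodl_P: "snd (prodl X (map (\<lambda>j. (ed p q j, \<xi> j)) js)) = Pl X p q \<xi> js"
  by (induction js) (auto simp: prodl_fst o_def Pd_def)

lemma Tm_0: "Tm X p q b \<xi> (j # js) 0 = dmul X (q j) (Pd p q js) (b j) (Pl X p q \<xi> js)"
  unfolding Tm_def by (simp add: prodl_fst prodl_P o_def Pd_def)

lemma Tm_Suc: "k < length js \<Longrightarrow> Tm X p q b \<xi> (j # js) (Suc k)
   = dmul X (ed p q j) (Sd p q js) (bar X (ed p q j) (\<xi> j)) (Tm X p q b \<xi> js k)"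
  unfolding Tm_def using Tm_deg[of k js p q X \<xi> b] by (simp add: prodl_fst)

context dgaL begin

lemma foldr_mul:
  assumes x: "x \<in> C E" and f: "\<forall>k\<in>set ks. f k \<in> C Sv" and D: "D = E + Sv"
  shows "foldr (\<lambda>k acc. ad D (mu E Sv x (f k)) acc) ks (z0 D)
       = mu E Sv x (foldr (\<lambda>k acc. ad Sv (f k) acc) ks (z0 Sv))"
  using f
proof (induction ks)
  case Nil thus ?case using x D by simp
next
  case (Cons k ks)
  have fs: "foldr (\<lambda>k acc. ad Sv (f k) acc) ks (z0 Sv) \<in> C Sv"
    using Cons.prems by (induction ks) auto
  show ?case using Cons x fs D by (simp add: mul_add_rightD)
qed

lemma Tm_C: "(\<forall>j\<in>set js. \<xi> j \<in> C (ed p q j) \<and> b j \<in> C (q j)) \<Longrightarrow> k < length js \<Longrightarrow> Tm A p q b \<xi> js k \<in> C (Sd p q js)"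
proof (induction js arbitrary: k)
  case Nil thus ?case by simp
next
  case (Cons j js)
  show ?case
  proof (cases k)
    case 0
    have "Pl A p q \<xi> js \<in> C (Pd p q js)" using Cons.prems by (intro Pl_C) auto
    thus ?thesis using 0 Cons.prems by (auto simp: Tm_0 Sd_def ed_def)
  next
    case (Suc k')
    have "Tm A p q b \<xi> js k' \<in> C (Sd p q js)" using Cons Suc by auto
    thus ?thesis using Suc Cons.prems by (auto simp: Tm_Suc bar_def Sd_def ed_def)
  qed
qed

lemma sum_Tm: "(\<forall>j\<in>set js. \<xi> j \<in> C (ed p q j) \<and> b j \<in> C (q j)) \<Longrightarrow>
  foldr (\<lambda>k acc. ad (Sd p q js) (Tm A p q b \<xi> js k) acc) [0..<length js] (z0 (Sd p q js)) = Sl A p q b \<xi> js"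
proof (induction js)
  case Nil thus ?case by simp
next
  case (Cons j js)
  have xj: "\<xi> j \<in> C (ed p q j)" "b j \<in> C (q j)" using Cons.prems by auto
  have hs: "\<forall>j\<in>set js. \<xi> j \<in> C (ed p q j) \<and> b j \<in> C (q j)" using Cons.prems by auto
  have up: "[0..<length (j # js)] = 0 # map Suc [0..<length js]"
    by (simp add: map_Suc_upt upt_conv_Cons del: upt_Suc)
  have "foldr (\<lambda>k acc. ad (Sd p q (j # js)) (Tm A p q b \<xi> (j # js) k) acc) (map Suc [0..<length js]) (z0 (Sd p q (j # js)))
     = foldr (\<lambda>k acc. ad (Sd p q (j # js)) (mu (ed p q j) (Sd p q js) (bar A (ed p q j) (\<xi> j)) (Tm A p q b \<xi> js k)) acc)
         [0..<length js] (z0 (Sd p q (j # js)))"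
    by (simp add: foldr_map o_def) (rule foldr_cong, auto simp: Tm_Suc)
  also have "\<dots> = mu (ed p q j) (Sd p q js) (bar A (ed p q j) (\<xi> j))
      (foldr (\<lambda>k acc. ad (Sd p q js) (Tm A p q b \<xi> js k) acc) [0..<length js] (z0 (Sd p q js)))"
    using xj hs Tm_C[OF hs] by (intro foldr_mul) (auto simp: bar_def Sd_def ed_def)
  also have "\<dots> = mu (ed p q j) (Sd p q js) (bar A (ed p q j) (\<xi> j)) (Sl A p q b \<xi> js)"
    using Cons.IH hs by simp
  finally show ?case unfolding up by (simp add: Tm_0 bar_def)
qed


lemma massey_deg_Sd: "massey_deg p n q = Sd p q [1..<Suc n]"
proof -
  have "Pd p q [1..<Suc n] = (\<Sum>j\<in>{1..n}. p + q j - 1)"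
    unfolding Pd_def ed_fun interv_sum_list_conv_sum_set_nat by (simp add: atLeastLessThanSuc_atLeastAtMost del: upt_Suc)
  also have "\<dots> = (\<Sum>j\<in>{1..n}. (p - 1) + q j)" by (simp add: algebra_simps)
  also have "\<dots> = int n * (p - 1) + (\<Sum>j\<in>{1..n}. q j)" by (simp add: sum.distrib)
  finally show ?thesis unfolding Sd_def massey_deg_def by (simp add: algebra_simps)
qed

lemma massey_term_Tm: "k < n \<Longrightarrow> massey_term A p n q b \<xi> (Suc k) = Tm A p q b \<xi> [1..<Suc n] k"
  unfolding massey_term_def Tm_def ed_fun by (simp del: upt_Suc)

lemma massey_sum_Sl:
  assumes "\<forall>j\<in>{1..n}. \<xi> j \<in> C (ed p q j) \<and> b j \<in> C (q j)"
  shows "massey_sum A p n q b \<xi> = Sl A p q b \<xi> [1..<Suc n]"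
proof -
  have up: "[1..<Suc n] = map Suc [0..<n]" by (simp add: map_Suc_upt)
  have "massey_sum A p n q b \<xi> = foldr (\<lambda>k acc. ad (Sd p q [1..<Suc n]) (Tm A p q b \<xi> [1..<Suc n] k) acc)
      [0..<length [1..<Suc n]] (z0 (Sd p q [1..<Suc n]))"
    unfolding massey_sum_def massey_deg_Sd
    by (subst (1) up, simp add: foldr_map o_def del: upt_Suc) (rule foldr_cong, auto simp: massey_term_Tm simp del: upt_Suc)
  also have "\<dots> = Sl A p q b \<xi> [1..<Suc n]"
    using assms by (intro sum_Tm) auto
  finally show ?thesis .
qed

end


context dgaL begin

abbreviation "Z \<equiv> cocycles A"
abbreviation "B \<equiv> coboundaries A"

lemma Z_iff: "x \<in> Z k \<longleftrightarrow> x \<in> C k \<and> dd k x = z0 (k + 1)" by (simp add: cocycles_def)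
lemma B_iff: "y \<in> B k \<longleftrightarrow> (\<exists>x\<in>C (k - 1). y = dd (k - 1) x)" by (auto simp: coboundaries_def)

lemma B_C: "y \<in> B k \<Longrightarrow> y \<in> C k" unfolding B_iff by auto
lemma B_Z: "y \<in> B k \<Longrightarrow> y \<in> Z k"
proof -
  assume "y \<in> B k"
  then obtain x where x: "x \<in> C (k - 1)" "y = dd (k - 1) x" unfolding B_iff by auto
  have "dd (k - 1 + 1) (dd (k - 1) x) = z0 (k - 1 + 2)" using d_d[OF x(1)] .
  thus ?thesis unfolding Z_iff using x by (auto simp: add.commute)
qed
lemma B_zero[simp]: "z0 k \<in> B k"
  unfolding B_iff by (rule bexI[of _ "z0 (k - 1)"]) (use d_zero[of "k - 1"] in auto)
lemma B_add: "u \<in> B k \<Longrightarrow> v \<in> B k \<Longrightarrow> ad k u v \<in> B k"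
proof -
  assume "u \<in> B k" "v \<in> B k"
  then obtain x y where x: "x \<in> C (k - 1)" "u = dd (k - 1) x" and y: "y \<in> C (k - 1)" "v = dd (k - 1) y"
    unfolding B_iff by auto
  have "ad k u v = dd (k - 1) (ad (k - 1) x y)" using x y by (simp add: d_addD)
  thus ?thesis unfolding B_iff using x y by auto
qed
lemma B_smul: "u \<in> B k \<Longrightarrow> sm k c u \<in> B k"
proof -
  assume "u \<in> B k"
  then obtain x where x: "x \<in> C (k - 1)" "u = dd (k - 1) x" unfolding B_iff by auto
  have "sm k c u = dd (k - 1) (sm (k - 1) c x)" using x by (simp add: d_smulD)
  thus ?thesis unfolding B_iff using x by auto
qed

lemma Z_zero[simp]: "z0 k \<in> Z k" by (simp add: Z_iff)
lemma Z_add: "u \<in> Z k \<Longrightarrow> v \<in> Z k \<Longrightarrow> ad k u v \<in> Z k" by (simp add: Z_iff d_add)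
lemma Z_smul: "u \<in> Z k \<Longrightarrow> sm k c u \<in> Z k" by (simp add: Z_iff d_smul)
lemma Z_one: "one \<in> Z 0" by (simp add: Z_iff)
lemma Z_mul: "u \<in> Z k \<Longrightarrow> v \<in> Z l \<Longrightarrow> m = k + l \<Longrightarrow> mu k l u v \<in> Z m"
proof -
  assume u: "u \<in> Z k" and v: "v \<in> Z l" and m: "m = k + l"
  have "dd (k + l) (mu k l u v) = z0 (k + l + 1)"
    using u v by (simp add: Z_iff leibniz0 ac_simps)
  thus ?thesis using u v m by (simp add: Z_iff mul_C0)
qed

lemma ZB_mul: "x \<in> Z k \<Longrightarrow> y \<in> B l \<Longrightarrow> m = k + l \<Longrightarrow> mu k l x y \<in> B m"
proof -
  assume x: "x \<in> Z k" and y: "y \<in> B l" and m: "m = k + l"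
  obtain u where u: "u \<in> C (l - 1)" "y = dd (l - 1) u" using y unfolding B_iff by auto
  have xC: "x \<in> C k" and dx: "dd k x = z0 (k + 1)" using x by (auto simp: Z_iff)
  have "dd (k + (l - 1)) (mu k (l - 1) x u) = ad (k + (l - 1) + 1) (mu (k + 1) (l - 1) (dd k x) u)
      (sm (k + (l - 1) + 1) (sgn_deg k) (mu k (l - 1 + 1) x (dd (l - 1) u)))"
    using xC u(1) by (rule leibniz0)
  also have "\<dots> = sm m (sgn_deg k) (mu k l x y)" using xC u m by (simp add: dx)
  finally have e: "dd (m - 1) (mu k (l - 1) x u) = sm m (sgn_deg k) (mu k l x y)" using m by (simp add: algebra_simps)
  have "mu k l x y = sm m (sgn_deg k) (sm m (sgn_deg k) (mu k l x y))"
    using xC u m by (simp add: mul_C0)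
  also have "\<dots> = dd (m - 1) (sm (m - 1) (sgn_deg k) (mu k (l - 1) x u))"
    using xC u m e by (simp add: d_smulD)
  finally show ?thesis unfolding B_iff using xC u m by auto
qed

lemma BZ_mul: "y \<in> B k \<Longrightarrow> x \<in> Z l \<Longrightarrow> m = k + l \<Longrightarrow> mu k l y x \<in> B m"
proof -
  assume y: "y \<in> B k" and x: "x \<in> Z l" and m: "m = k + l"
  obtain u where u: "u \<in> C (k - 1)" "y = dd (k - 1) u" using y unfolding B_iff by auto
  have xC: "x \<in> C l" and dx: "dd l x = z0 (l + 1)" using x by (auto simp: Z_iff)
  have "dd (k - 1 + l) (mu (k - 1) l u x) = ad (k - 1 + l + 1) (mu (k - 1 + 1) l (dd (k - 1) u) x)
      (sm (k - 1 + l + 1) (sgn_deg (k - 1)) (mu (k - 1) (l + 1) u (dd l x)))"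
    using u(1) xC by (rule leibniz0)
  also have "\<dots> = mu k l y x" using xC u m by (simp add: dx mul_C0)
  finally have e: "dd (m - 1) (mu (k - 1) l u x) = mu k l y x" using m by (simp add: algebra_simps)
  show ?thesis unfolding B_iff using xC u m e by (auto intro!: bexI[of _ "mu (k - 1) l u x"])
qed


lemma add_neg_cancel1: "x \<in> C k \<Longrightarrow> w \<in> C k \<Longrightarrow> ad k (sm k (-1) x) (ad k x w) = w"
  by (simp add: add_assoc[symmetric])
lemma add_neg_cancel2: "x \<in> C k \<Longrightarrow> w \<in> C k \<Longrightarrow> ad k x (ad k (sm k (-1) x) w) = w"
  by (simp add: add_assoc[symmetric])

lemma vec_solve: "r \<in> C k \<Longrightarrow> s \<in> C k \<Longrightarrow> t \<in> C k \<Longrightarrow> \<beta> \<in> C k \<Longrightarrow>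
   sm k (-1) r = ad k (ad k s t) \<beta> \<Longrightarrow> ad k r s = sm k (-1) (ad k t \<beta>)"
proof -
  assume r: "r \<in> C k" and s: "s \<in> C k" and t: "t \<in> C k" and b: "\<beta> \<in> C k"
    and e: "sm k (-1) r = ad k (ad k s t) \<beta>"
  have "r = sm k (-1) (sm k (-1) r)" using r by simp
  also have "\<dots> = ad k (ad k (sm k (-1) s) (sm k (-1) t)) (sm k (-1) \<beta>)"
    unfolding e using s t b by (simp add: smul_add)
  finally have r': "r = ad k (ad k (sm k (-1) s) (sm k (-1) t)) (sm k (-1) \<beta>)" .
  have "ad k r s = ad k (sm k (-1) s) (ad k s (ad k (sm k (-1) t) (sm k (-1) \<beta>)))"
    unfolding r' using s t b by (simp add: add_assoc add_comm[of _ k s] add_left_commute[of _ k s])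
  also have "\<dots> = ad k (sm k (-1) t) (sm k (-1) \<beta>)" using s t b by (simp add: add_neg_cancel1)
  also have "\<dots> = sm k (-1) (ad k t \<beta>)" using t b by (simp add: smul_add)
  finally show ?thesis .
qed

lemma cls_mem: "x \<in> C k \<Longrightarrow> x \<in> cls A k x"
  unfolding cls_def by (rule CollectI, rule exI[of _ "z0 k"]) simp

lemma mem_clsD: "y \<in> cls A k x \<Longrightarrow> \<exists>\<beta>\<in>B k. y = ad k x \<beta>"
  unfolding cls_def by auto

lemma rep_cls: "x \<in> C k \<Longrightarrow> \<exists>\<beta>\<in>B k. rep (cls A k x) = ad k x \<beta>"
proof -
  assume x: "x \<in> C k"
  have "rep (cls A k x) \<in> cls A k x" unfolding rep_def using cls_mem[OF x] by (rule someI)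
  thus ?thesis by (rule mem_clsD)
qed

lemma cls_eqI: "x \<in> C k \<Longrightarrow> \<beta> \<in> B k \<Longrightarrow> cls A k (ad k x \<beta>) = cls A k x"
proof -
  assume x: "x \<in> C k" and b: "\<beta> \<in> B k"
  have bC: "\<beta> \<in> C k" using b by (rule B_C)
  show ?thesis
  proof
    show "cls A k (ad k x \<beta>) \<subseteq> cls A k x"
    proof
      fix y assume "y \<in> cls A k (ad k x \<beta>)"
      then obtain c where c: "c \<in> B k" "y = ad k (ad k x \<beta>) c" unfolding cls_def by auto
      have "y = ad k x (ad k \<beta> c)" using c x bC B_C[OF c(1)] by (simp add: add_assoc)
      moreover have "ad k \<beta> c \<in> B k" using b c by (simp add: B_add)
      ultimately show "y \<in> cls A k x" unfolding cls_def by auto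
    qed
    show "cls A k x \<subseteq> cls A k (ad k x \<beta>)"
    proof
      fix y assume "y \<in> cls A k x"
      then obtain c where c: "c \<in> B k" "y = ad k x c" unfolding cls_def by auto
      have cC: "c \<in> C k" using c(1) by (rule B_C)
      have "y = ad k (ad k x \<beta>) (ad k (sm k (-1) \<beta>) c)"
        using c x bC cC by (simp add: add_assoc add_neg_cancel2)
      moreover have "ad k (sm k (-1) \<beta>) c \<in> B k" using b c by (simp add: B_add B_smul)
      ultimately show "y \<in> cls A k (ad k x \<beta>)" unfolding cls_def by auto
    qed
  qed
qed

lemma cls_B: "\<beta> \<in> B k \<Longrightarrow> cls A k \<beta> = cls A k (z0 k)"
  using cls_eqI[of "z0 k" k \<beta>] B_C[of \<beta> k] by simp

lemma cls_eq_B: "x \<in> C k \<Longrightarrow> cls A k x = cls A k y \<Longrightarrow> \<exists>\<beta>\<in>B k. x = ad k y \<beta>"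
  using cls_mem[of x k] mem_clsD by auto


abbreviation "H \<equiv> cohom A"
abbreviation "Z0 k \<equiv> cls A k (z0 k)"

lemma H_car: "dcar H k = cls A k ` Z k" by (simp add: cohom_def)
lemma H_zero: "dzero H k = Z0 k" by (simp add: cohom_def)
lemma H_add: "dadd H k X Y = cls A k (ad k (rep X) (rep Y))" by (simp add: cohom_def)
lemma H_smul: "dsmul H k c X = cls A k (sm k c (rep X))" by (simp add: cohom_def)
lemma H_mul: "dmul H k l X Y = cls A (k + l) (mu k l (rep X) (rep Y))" by (simp add: cohom_def)
lemma H_unit: "dunit H = cls A 0 one" by (simp add: cohom_def)
lemma H_d: "ddiff H k X = Z0 (k + 1)" by (simp add: cohom_def)

lemma Hrep: "X \<in> dcar H k \<Longrightarrow> rep X \<in> Z k \<and> X = cls A k (rep X)"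
proof -
  assume "X \<in> dcar H k"
  then obtain z where z: "z \<in> Z k" "X = cls A k z" unfolding H_car by auto
  have zC: "z \<in> C k" using z(1) by (simp add: Z_iff)
  obtain \<beta> where b: "\<beta> \<in> B k" "rep (cls A k z) = ad k z \<beta>" using rep_cls[OF zC] by auto
  have "rep X \<in> Z k" using z b by (simp add: Z_add B_Z)
  moreover have "X = cls A k (rep X)" using z b zC by (simp add: cls_eqI)
  ultimately show ?thesis ..
qed

lemma Hrep_Z: "X \<in> dcar H k \<Longrightarrow> rep X \<in> Z k" using Hrep by blast
lemma Hrep_C: "X \<in> dcar H k \<Longrightarrow> rep X \<in> C k" using Hrep Z_iff by blast

lemma rep_Z0: "rep (Z0 k) \<in> B k"
  using rep_cls[of "z0 k" k] by (auto simp: B_C)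

lemma Z0_H[simp]: "Z0 k \<in> dcar H k" unfolding H_car by auto

lemma H_mul_C: "X \<in> dcar H k \<Longrightarrow> Y \<in> dcar H l \<Longrightarrow> dmul H k l X Y \<in> dcar H (k + l)"
proof -
  assume "X \<in> dcar H k" "Y \<in> dcar H l"
  hence "mu k l (rep X) (rep Y) \<in> Z (k + l)" by (intro Z_mul) (auto intro: Hrep_Z)
  thus ?thesis unfolding H_mul H_car by auto
qed
lemma H_add_C: "X \<in> dcar H k \<Longrightarrow> Y \<in> dcar H k \<Longrightarrow> dadd H k X Y \<in> dcar H k"
proof -
  assume "X \<in> dcar H k" "Y \<in> dcar H k"
  hence "ad k (rep X) (rep Y) \<in> Z k" by (intro Z_add) (auto intro: Hrep_Z)
  thus ?thesis unfolding H_add H_car by auto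
qed
lemma H_smul_C: "X \<in> dcar H k \<Longrightarrow> dsmul H k c X \<in> dcar H k"
proof -
  assume "X \<in> dcar H k"
  hence "sm k c (rep X) \<in> Z k" by (intro Z_smul) (auto intro: Hrep_Z)
  thus ?thesis unfolding H_smul H_car by auto
qed
lemma H_unit_C: "dunit H \<in> dcar H 0"
  unfolding H_unit H_car using Z_one by auto

lemma H_mul_Z0_left: "Y \<in> dcar H l \<Longrightarrow> dmul H k l (Z0 k) Y = Z0 (k + l)"
  unfolding H_mul by (rule cls_B, rule BZ_mul[OF rep_Z0]) (auto intro: Hrep_Z)
lemma H_mul_Z0_right: "X \<in> dcar H k \<Longrightarrow> dmul H k l X (Z0 l) = Z0 (k + l)"
  unfolding H_mul by (rule cls_B, rule ZB_mul[OF _ rep_Z0]) (auto intro: Hrep_Z)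
lemma H_smul_Z0: "dsmul H k c (Z0 k) = Z0 k"
  unfolding H_smul by (rule cls_B, rule B_smul[OF rep_Z0])
lemma H_add_Z0: "dadd H k (Z0 k) (Z0 k) = Z0 k"
  unfolding H_add by (rule cls_B, rule B_add[OF rep_Z0 rep_Z0])
lemma H_smul_0: "X \<in> dcar H k \<Longrightarrow> dsmul H k 0 X = Z0 k"
  unfolding H_smul using Hrep_C by simp

lemma H_cocycles: "cocycles H k = dcar H k"
  by (auto simp: cocycles_def H_d H_zero)
lemma H_coboundaries: "coboundaries H k = {Z0 k}"
proof -
  have "coboundaries H k = {Z0 (k - 1 + 1) | X. X \<in> dcar H (k - 1)}"
    by (simp add: coboundaries_def H_d)
  also have "\<dots> = {Z0 k}" using Z0_H[of "k - 1"] by (auto intro!: exI[where x="Z0 (k - 1)"])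
  finally show ?thesis .
qed

lemma H_cancel:
  assumes X: "X \<in> dcar H k" and Y: "Y \<in> dcar H k"
    and e: "cls A k (sm k (-1) (rep X)) = dadd H k Y (Z0 k)"
  shows "dadd H k X Y = Z0 k"
proof -
  have r: "rep X \<in> C k" and s: "rep Y \<in> C k" using X Y by (auto intro: Hrep_C)
  have t: "rep (Z0 k) \<in> C k" using rep_Z0 B_C by blast
  obtain \<beta> where b: "\<beta> \<in> B k" "sm k (-1) (rep X) = ad k (ad k (rep Y) (rep (Z0 k))) \<beta>"
    using cls_eq_B[of "sm k (-1) (rep X)" k] e r unfolding H_add by auto
  have "ad k (rep X) (rep Y) = sm k (-1) (ad k (rep (Z0 k)) \<beta>)"
    using r s t B_C[OF b(1)] b(2) by (rule vec_solve)
  also have "\<dots> \<in> B k" using rep_Z0 b by (simp add: B_add B_smul)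
  finally show ?thesis unfolding H_add by (rule cls_B)
qed

end


lemma Sd_Cons: "Sd p q (j # js) = q j + Pd p q js" by (simp add: Sd_def ed_def)
lemma Sd_Cons2: "Sd p q (j # js) = ed p q j + Sd p q js" by (simp add: Sd_def ed_def)

context dgaL begin

lemma hom_parts:
  assumes "dga_hom A Y f"
  shows "\<And>k x. x \<in> C k \<Longrightarrow> f k x \<in> dcar Y k"
    and "\<And>k x y. x \<in> C k \<Longrightarrow> y \<in> C k \<Longrightarrow> f k (ad k x y) = dadd Y k (f k x) (f k y)"
    and "\<And>k c x. x \<in> C k \<Longrightarrow> f k (sm k c x) = dsmul Y k c (f k x)"
    and "\<And>k l x y. x \<in> C k \<Longrightarrow> y \<in> C l \<Longrightarrow> f (k + l) (mu k l x y) = dmul Y k l (f k x) (f l y)"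
    and "f 0 one = dunit Y"
    and "\<And>k x. x \<in> C k \<Longrightarrow> f (k + 1) (dd k x) = ddiff Y k (f k x)"
  using assms unfolding dga_hom_def by auto

lemma hom_mulD: "dga_hom A Y f \<Longrightarrow> x \<in> C k \<Longrightarrow> y \<in> C l \<Longrightarrow> m = k + l \<Longrightarrow>
   f m (mu k l x y) = dmul Y k l (f k x) (f l y)"
  using hom_parts(4) by blast

lemma hom_Pl:
  assumes f: "dga_hom A Y f" and h: "\<forall>j\<in>set js. \<xi> j \<in> C (ed p q j)"
  shows "f (Pd p q js) (Pl A p q \<xi> js) = Pl Y p q (\<lambda>j. f (ed p q j) (\<xi> j)) js"
  using h
proof (induction js)
  case Nil thus ?case using hom_parts(5)[OF f] by simp
next
  case (Cons j js)
  have "Pl A p q \<xi> js \<in> C (Pd p q js)" using Cons.prems by (intro Pl_C) auto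
  thus ?case using Cons by (simp add: hom_parts(4)[OF f])
qed

lemma hom_Sl:
  assumes f: "dga_hom A Y f" and h: "\<forall>j\<in>set js. \<xi> j \<in> C (ed p q j) \<and> b j \<in> C (q j)"
    and z: "\<And>k. f k (z0 k) = dzero Y k"
  shows "f (Sd p q js) (Sl A p q b \<xi> js) = Sl Y p q (\<lambda>j. f (q j) (b j)) (\<lambda>j. f (ed p q j) (\<xi> j)) js"
  using h
proof (induction js)
  case Nil thus ?case using z by simp
next
  case (Cons j js)
  have xj: "\<xi> j \<in> C (ed p q j)" "b j \<in> C (q j)" using Cons.prems by auto
  have hs: "\<forall>j\<in>set js. \<xi> j \<in> C (ed p q j) \<and> b j \<in> C (q j)" using Cons.prems by auto
  have P: "Pl A p q \<xi> js \<in> C (Pd p q js)" using hs by (intro Pl_C) auto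
  have S: "Sl A p q b \<xi> js \<in> C (Sd p q js)" using hs by (intro Sl_C) auto
  have sx: "sm (ed p q j) (sgn_deg (ed p q j)) (\<xi> j) \<in> C (ed p q j)" using xj by simp
  have "f (Sd p q (j # js)) (Sl A p q b \<xi> (j # js))
     = dadd Y (Sd p q (j # js)) (f (Sd p q (j # js)) (mu (q j) (Pd p q js) (b j) (Pl A p q \<xi> js)))
         (f (Sd p q (j # js)) (mu (ed p q j) (Sd p q js) (sm (ed p q j) (sgn_deg (ed p q j)) (\<xi> j)) (Sl A p q b \<xi> js)))"
    unfolding Sl.simps using xj P S sx
    by (intro hom_parts(2)[OF f]) (auto simp: Sd_def ed_def)
  also have "f (Sd p q (j # js)) (mu (q j) (Pd p q js) (b j) (Pl A p q \<xi> js))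
     = dmul Y (q j) (Pd p q js) (f (q j) (b j)) (Pl Y p q (\<lambda>j. f (ed p q j) (\<xi> j)) js)"
    using xj P hs by (subst hom_mulD[OF f]) (auto simp: Sd_Cons hom_Pl[OF f])
  also have "f (Sd p q (j # js)) (mu (ed p q j) (Sd p q js) (sm (ed p q j) (sgn_deg (ed p q j)) (\<xi> j)) (Sl A p q b \<xi> js))
     = dmul Y (ed p q j) (Sd p q js) (dsmul Y (ed p q j) (sgn_deg (ed p q j)) (f (ed p q j) (\<xi> j)))
         (Sl Y p q (\<lambda>j. f (q j) (b j)) (\<lambda>j. f (ed p q j) (\<xi> j)) js)"
    using xj S sx hs Cons.IH by (subst hom_mulD[OF f]) (auto simp: Sd_Cons2 hom_parts(3)[OF f])
  finally show ?case by simp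
qed

end


lemma Pl_cong: "(\<forall>j\<in>set js. \<xi> j = \<xi>2 j) \<Longrightarrow> Pl X p q \<xi> js = Pl X p q \<xi>2 js"
  by (induction js) auto
lemma Sl_cong: "(\<forall>j\<in>set js. \<xi> j = \<xi>2 j \<and> b j = b2 j) \<Longrightarrow> Sl X p q b \<xi> js = Sl X p q b2 \<xi>2 js"
proof (induction js)
  case Nil thus ?case by simp
next
  case (Cons j js)
  have "Pl X p q \<xi> js = Pl X p q \<xi>2 js" using Cons.prems by (intro Pl_cong) auto
  thus ?case using Cons by simp
qed

context dgaL begin

lemma Pl_H_C: "(\<forall>j\<in>set js. \<xi> j \<in> dcar H (ed p q j)) \<Longrightarrow> Pl H p q \<xi> js \<in> dcar H (Pd p q js)"
proof (induction js)
  case Nil thus ?case using H_unit_C by simp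
next
  case (Cons j js) thus ?case using H_mul_C by simp
qed

lemma Sl_H_C: "(\<forall>j\<in>set js. \<xi> j \<in> dcar H (ed p q j) \<and> b j \<in> dcar H (q j)) \<Longrightarrow> Sl H p q b \<xi> js \<in> dcar H (Sd p q js)"
proof (induction js)
  case Nil thus ?case by (simp add: H_zero)
next
  case (Cons j js)
  have P: "Pl H p q \<xi> js \<in> dcar H (Pd p q js)" using Cons.prems by (intro Pl_H_C) auto
  have S: "Sl H p q b \<xi> js \<in> dcar H (Sd p q js)" using Cons by auto
  have 1: "dmul H (q j) (Pd p q js) (b j) (Pl H p q \<xi> js) \<in> dcar H (Sd p q (j # js))"
    using H_mul_C[of "b j" "q j" "Pl H p q \<xi> js" "Pd p q js"] P Cons.prems by (simp add: Sd_Cons)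
  have 2: "dmul H (ed p q j) (Sd p q js) (dsmul H (ed p q j) (sgn_deg (ed p q j)) (\<xi> j)) (Sl H p q b \<xi> js)
      \<in> dcar H (Sd p q (j # js))"
    using H_mul_C[OF H_smul_C S, of "\<xi> j" "ed p q j"] Cons.prems by (simp add: Sd_Cons2)
  show ?case using H_add_C[OF 1 2] by simp
qed

lemma Pl_H_Z0:
  assumes ne: "js \<noteq> []" and h: "\<forall>j\<in>set js. \<xi> j = Z0 (ed p q j)"
  shows "Pl H p q \<xi> js = Z0 (Pd p q js)"
proof -
  obtain j js' where Cons: "js = j # js'" using ne by (cases js) auto
  have "Pl H p q \<xi> js' \<in> dcar H (Pd p q js')" using Cons h by (intro Pl_H_C) auto
  thus ?thesis using Cons h by (simp add: H_mul_Z0_left)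
qed

lemma Sl_H_Z0:
  assumes "2 \<le> length js" and "\<forall>j\<in>set js. \<xi> j = Z0 (ed p q j) \<and> b j \<in> dcar H (q j)"
  shows "Sl H p q b \<xi> js = Z0 (Sd p q js)"
  using assms
proof (induction js)
  case Nil thus ?case by simp
next
  case (Cons j js)
  have ne: "js \<noteq> []" using Cons.prems by auto
  have P: "Pl H p q \<xi> js = Z0 (Pd p q js)" using ne Cons.prems by (intro Pl_H_Z0) auto
  have S: "Sl H p q b \<xi> js \<in> dcar H (Sd p q js)" using Cons.prems by (intro Sl_H_C) auto
  have xj: "\<xi> j = Z0 (ed p q j)" "b j \<in> dcar H (q j)" using Cons.prems by auto
  have 1: "dmul H (q j) (Pd p q js) (b j) (Pl H p q \<xi> js) = Z0 (Sd p q (j # js))"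
    unfolding P using H_mul_Z0_right[OF xj(2)] by (simp add: Sd_Cons)
  have 2: "dmul H (ed p q j) (Sd p q js) (dsmul H (ed p q j) (sgn_deg (ed p q j)) (\<xi> j)) (Sl H p q b \<xi> js)
      = Z0 (Sd p q (j # js))"
    unfolding xj(1) H_smul_Z0 using H_mul_Z0_left[OF S] by (simp add: Sd_Cons2)
  show ?case unfolding Sl.simps 1 2 H_add_Z0 ..
qed

lemma B_minus: "u \<in> B k \<Longrightarrow> w \<in> B k \<Longrightarrow> v \<in> C k \<Longrightarrow> u = ad k v w \<Longrightarrow> v \<in> B k"
proof -
  assume u: "u \<in> B k" and w: "w \<in> B k" and v: "v \<in> C k" and e: "u = ad k v w"
  have wC: "w \<in> C k" using w by (rule B_C)
  have "v = ad k u (sm k (-1) w)" unfolding e using v wC by (simp add: add_assoc)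
  also have "\<dots> \<in> B k" using u w by (simp add: B_add B_smul)
  finally show ?thesis .
qed

lemma prod_modB:
  assumes x': "x' \<in> Z k" and y': "y' \<in> Z l" and b1: "\<beta>1 \<in> B k" and b2: "\<beta>2 \<in> B l"
    and m: "m = k + l" and P: "mu k l (ad k x' \<beta>1) (ad l y' \<beta>2) \<in> B m"
  shows "mu k l x' y' \<in> B m"
proof -
  have xC: "x' \<in> C k" and yC: "y' \<in> C l" using x' y' by (auto simp: Z_iff)
  have b1C: "\<beta>1 \<in> C k" and b2C: "\<beta>2 \<in> C l" using b1 b2 by (auto intro: B_C)
  have e: "mu k l (ad k x' \<beta>1) (ad l y' \<beta>2) = ad m (mu k l x' y')
       (ad m (mu k l x' \<beta>2) (ad m (mu k l \<beta>1 y') (mu k l \<beta>1 \<beta>2)))"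
    using xC yC b1C b2C m by (simp add: mul_add_left mul_add_right add_assoc add_left_commute mul_C0)
  show ?thesis
  proof (rule B_minus[OF P _ _ e])
    show "ad m (mu k l x' \<beta>2) (ad m (mu k l \<beta>1 y') (mu k l \<beta>1 \<beta>2)) \<in> B m"
      using x' y' b1 b2 m B_Z[OF b2] by (intro B_add ZB_mul BZ_mul) auto
    show "mu k l x' y' \<in> C m" using xC yC m by auto
  qed
qed


lemma L6:
  assumes x: "x \<in> C (p + Q - 1)" and y: "y \<in> Z Q" and aT: "aT \<in> C p" and e: "\<epsilon> \<in> C (p - 1)"
    and dx: "dd (p + Q - 1) x = mu p Q aT y"
  shows "dd (p + Q - 1) (ad (p + Q - 1) x (mu (p - 1) Q \<epsilon> y)) = mu p Q (ad p aT (dd (p - 1) \<epsilon>)) y"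
proof -
  have yC: "y \<in> C Q" and dy: "dd Q y = z0 (Q + 1)" using y by (auto simp: Z_iff)
  have "dd (p + Q - 1) (ad (p + Q - 1) x (mu (p - 1) Q \<epsilon> y))
      = ad (p + Q) (dd (p + Q - 1) x) (dd (p + Q - 1) (mu (p - 1) Q \<epsilon> y))"
    using x e yC by (intro d_addD) auto
  also have "dd (p + Q - 1) (mu (p - 1) Q \<epsilon> y) = ad (p + Q) (mu (p - 1 + 1) Q (dd (p - 1) \<epsilon>) y)
      (sm (p + Q) (sgn_deg (p - 1)) (mu (p - 1) (Q + 1) \<epsilon> (dd Q y)))"
    using e yC by (rule leibniz) auto
  also have "\<dots> = mu p Q (dd (p - 1) \<epsilon>) y" using e yC dy by (simp add: mul_C0)
  also have "ad (p + Q) (dd (p + Q - 1) x) (mu p Q (dd (p - 1) \<epsilon>) y) = mu p Q (ad p aT (dd (p - 1) \<epsilon>)) y"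
    unfolding dx using aT e yC by (subst mul_add_leftD) auto
  finally show ?thesis .
qed

lemma L7:
  assumes p: "even p" and x: "x \<in> C (p + Q - 1)" and a: "a \<in> Z p" and g: "\<gamma> \<in> C (Q - 1)"
    and y: "y \<in> C Q" and dx: "dd (p + Q - 1) x = mu p Q a y"
  shows "dd (p + Q - 1) (ad (p + Q - 1) x (mu p (Q - 1) a \<gamma>)) = mu p Q a (ad Q y (dd (Q - 1) \<gamma>))"
proof -
  have aC: "a \<in> C p" and da: "dd p a = z0 (p + 1)" using a by (auto simp: Z_iff)
  have "dd (p + Q - 1) (ad (p + Q - 1) x (mu p (Q - 1) a \<gamma>))
      = ad (p + Q) (dd (p + Q - 1) x) (dd (p + Q - 1) (mu p (Q - 1) a \<gamma>))"
    using x aC g by (intro d_addD) auto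
  also have "dd (p + Q - 1) (mu p (Q - 1) a \<gamma>) = ad (p + Q) (mu (p + 1) (Q - 1) (dd p a) \<gamma>)
      (sm (p + Q) (sgn_deg p) (mu p (Q - 1 + 1) a (dd (Q - 1) \<gamma>)))"
    using aC g by (rule leibniz) auto
  also have "\<dots> = mu p Q a (dd (Q - 1) \<gamma>)" using aC g da p by (simp add: mul_C0)
  also have "ad (p + Q) (dd (p + Q - 1) x) (mu p Q a (dd (Q - 1) \<gamma>)) = mu p Q a (ad Q y (dd (Q - 1) \<gamma>))"
    unfolding dx using aC y g by (subst mul_add_rightD) auto
  finally show ?thesis .
qed

lemma final_A:
  assumes p: "even p" and a: "a \<in> Z p" and aT: "aT \<in> Z p" and e: "\<epsilon> \<in> C (p - 1)"
    and ha: "a = ad p aT (dd (p - 1) \<epsilon>)"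
    and hb: "\<forall>i\<in>set js. b i \<in> Z (q i) \<and> bt i \<in> Z (q i) \<and> eb i \<in> C (q i - 1) \<and>
       b i = ad (q i) (bt i) (dd (q i - 1) (eb i)) \<and> \<xi>t i \<in> C (ed p q i) \<and>
       dd (ed p q i) (\<xi>t i) = mu p (q i) aT (bt i)"
    and hS: "Sl A p q bt \<xi>t js \<in> B (Sd p q js)"
  shows "\<exists>\<xi>. (\<forall>i\<in>set js. \<xi> i \<in> C (ed p q i) \<and> dd (ed p q i) (\<xi> i) = mu p (q i) a (b i))
            \<and> Sl A p q b \<xi> js \<in> B (Sd p q js)"
proof -
  have aC: "a \<in> C p" and aTC: "aT \<in> C p" using a aT by (auto simp: Z_iff)
  define \<xi>h where "\<xi>h = (\<lambda>i. ad (ed p q i) (\<xi>t i) (mu (p - 1) (q i) \<epsilon> (bt i)))"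
  define \<xi> where "\<xi> = (\<lambda>i. ad (ed p q i) (\<xi>h i) (mu p (q i - 1) a (eb i)))"
  have ac: "Sl A p q bt \<xi>h js = Sl A p q bt \<xi>t js"
    unfolding \<xi>h_def using a_change[OF p e, of js \<xi>t q bt] hb by (auto simp: Z_iff)
  have H1: "\<forall>i\<in>set js. \<xi>h i \<in> C (ed p q i) \<and> bt i \<in> C (q i) \<and> eb i \<in> C (q i - 1) \<and>
        dd (ed p q i) (\<xi>h i) = mu p (q i) a (bt i) \<and>
        \<xi> i = ad (ed p q i) (\<xi>h i) (mu p (q i - 1) a (eb i)) \<and>
        b i = ad (q i) (bt i) (dd (q i - 1) (eb i)) \<and>
        dd (ed p q i) (\<xi> i) = mu p (q i) a (b i) \<and> dd (q i) (b i) = z0 (q i + 1)"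
  proof
    fix i assume i: "i \<in> set js"
    have bi: "b i \<in> Z (q i)" "bt i \<in> Z (q i)" "eb i \<in> C (q i - 1)"
      "b i = ad (q i) (bt i) (dd (q i - 1) (eb i))" "\<xi>t i \<in> C (ed p q i)"
      "dd (ed p q i) (\<xi>t i) = mu p (q i) aT (bt i)" using hb i by auto
    have btC: "bt i \<in> C (q i)" using bi(2) by (simp add: Z_iff)
    have xh: "\<xi>h i \<in> C (ed p q i)" unfolding \<xi>h_def using bi(5) e btC by (auto simp: ed_def)
    have dxh: "dd (ed p q i) (\<xi>h i) = mu p (q i) a (bt i)"
      unfolding \<xi>h_def ha using L6[of "\<xi>t i" p "q i" "bt i" aT \<epsilon>] bi aTC e by (simp add: ed_def)
    have dx: "dd (ed p q i) (\<xi> i) = mu p (q i) a (b i)"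
      unfolding \<xi>_def bi(4) using L7[OF p _ a bi(3) btC, of "\<xi>h i"] xh dxh by (simp add: ed_def)
    show "\<xi>h i \<in> C (ed p q i) \<and> bt i \<in> C (q i) \<and> eb i \<in> C (q i - 1) \<and>
        dd (ed p q i) (\<xi>h i) = mu p (q i) a (bt i) \<and>
        \<xi> i = ad (ed p q i) (\<xi>h i) (mu p (q i - 1) a (eb i)) \<and>
        b i = ad (q i) (bt i) (dd (q i - 1) (eb i)) \<and>
        dd (ed p q i) (\<xi> i) = mu p (q i) a (b i) \<and> dd (q i) (b i) = z0 (q i + 1)"
      using xh btC bi dxh dx by (auto simp: \<xi>_def Z_iff)
  qed
  have bc: "Rl A p q \<xi>h eb \<xi> js \<in> C (Sd p q js - 1) \<and>
      Sl A p q b \<xi> js = ad (Sd p q js) (Sl A p q bt \<xi>h js) (dd (Sd p q js - 1) (Rl A p q \<xi>h eb \<xi> js))"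
    using b_change[OF p aC H1] by blast
  have "dd (Sd p q js - 1) (Rl A p q \<xi>h eb \<xi> js) \<in> B (Sd p q js)"
    unfolding B_iff using bc by auto
  hence "Sl A p q b \<xi> js \<in> B (Sd p q js)" using bc ac hS by (simp add: B_add)
  moreover have "\<forall>i\<in>set js. \<xi> i \<in> C (ed p q i) \<and> dd (ed p q i) (\<xi> i) = mu p (q i) a (b i)"
  proof
    fix i assume i: "i \<in> set js"
    thus "\<xi> i \<in> C (ed p q i) \<and> dd (ed p q i) (\<xi> i) = mu p (q i) a (b i)"
      using H1 aC by (auto simp: \<xi>_def ed_def)
  qed
  ultimately show ?thesis by blast
qed


lemma hom_zero:
  assumes f: "dga_hom A Y f" and zY: "\<And>k y. y \<in> dcar Y k \<Longrightarrow> dsmul Y k 0 y = dzero Y k"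
  shows "f k (z0 k) = dzero Y k"
proof -
  have "f k (z0 k) = f k (sm k 0 (z0 k))" by simp
  also have "\<dots> = dsmul Y k 0 (f k (z0 k))" using hom_parts(3)[OF f, of "z0 k" k 0] by simp
  also have "\<dots> = dzero Y k" using zY hom_parts(1)[OF f] by simp
  finally show ?thesis .
qed

lemma hom_Z:
  assumes f: "dga_hom A Y f" and zY: "\<And>k y. y \<in> dcar Y k \<Longrightarrow> dsmul Y k 0 y = dzero Y k"
    and x: "x \<in> Z k"
  shows "f k x \<in> cocycles Y k"
proof -
  have xC: "x \<in> C k" and dx: "dd k x = z0 (k + 1)" using x by (auto simp: Z_iff)
  have "ddiff Y k (f k x) = f (k + 1) (dd k x)" using hom_parts(6)[OF f xC] by simp
  also have "\<dots> = dzero Y (k + 1)" unfolding dx by (rule hom_zero[OF f zY])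
  finally show ?thesis unfolding cocycles_def using hom_parts(1)[OF f xC] by simp
qed

lemma hom_B:
  assumes f: "dga_hom A Y f" and x: "x \<in> B k"
  shows "f k x \<in> coboundaries Y k"
proof -
  obtain u where u: "u \<in> C (k - 1)" "x = dd (k - 1) u" using x unfolding B_iff by auto
  have "f k x = f (k - 1 + 1) (dd (k - 1) u)" using u by simp
  also have "\<dots> = ddiff Y (k - 1) (f (k - 1) u)" using hom_parts(6)[OF f u(1)] .
  finally show ?thesis unfolding coboundaries_def using hom_parts(1)[OF f u(1)] by auto
qed

end


theorem theorem2p10:
  fixes A :: "'a dga" and p :: int and a :: 'a and n :: nat
    and q :: "nat \<Rightarrow> int" and b :: "nat \<Rightarrow> 'a"
  assumes "is_dga A"
    and "connected_dga A"
    and "n \<ge> 2"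
    and "massey_data A p a n q b"
    and "nontrivial_massey A p a n q b"
  shows "\<not> formal TYPE('m) A"
proof
  assume "formal TYPE('m) A"
  then obtain M :: "'m dga" and f g where mm: "minimal_model M A f"
    and gh: "dga_hom M (cohom A) g" and gq: "quasi_iso M (cohom A) g"
    unfolding formal_def by blast
  have dM: "is_dga M" and fh: "dga_hom M A f" and fq: "quasi_iso M A f"
    using mm unfolding minimal_model_def minimal_dga_def by auto
  interpret A: dgaL A by (rule dgaL.intro) (rule assms(1))
  interpret M: dgaL M by (rule dgaL.intro) (rule dM)
  have p: "even p" and a: "a \<in> cocycles A p"
    and hb: "\<forall>i\<in>{1..n}. b i \<in> cocycles A (q i) \<and> dmul A p (q i) a (b i) \<in> coboundaries A (p + q i)"
    using assms(4) unfolding massey_data_def by auto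
  have fsurj: "\<And>k w. w \<in> cocycles A k \<Longrightarrow> \<exists>z\<in>cocycles M k. \<exists>e\<in>coboundaries A k. w = dadd A k (f k z) e"
    and finj: "\<And>k z. z \<in> cocycles M k \<Longrightarrow> f k z \<in> coboundaries A k \<Longrightarrow> z \<in> coboundaries M k"
    using fq unfolding quasi_iso_def by auto
  have gsurj: "\<And>k w. w \<in> cocycles (cohom A) k \<Longrightarrow> \<exists>z\<in>cocycles M k. \<exists>e\<in>coboundaries (cohom A) k. w = dadd (cohom A) k (g k z) e"
    and ginj: "\<And>k z. z \<in> cocycles M k \<Longrightarrow> g k z \<in> coboundaries (cohom A) k \<Longrightarrow> z \<in> coboundaries M k"
    using gq unfolding quasi_iso_def by auto
  have zA: "\<And>k y. y \<in> dcar A k \<Longrightarrow> dsmul A k 0 y = dzero A k" by simp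
  have zH: "\<And>k y. y \<in> dcar (cohom A) k \<Longrightarrow> dsmul (cohom A) k 0 y = dzero (cohom A) k"
    by (simp add: A.H_smul_0 A.H_zero)
  have fz0: "\<And>k. f k (dzero M k) = dzero A k" by (rule M.hom_zero[OF fh zA])
  have gz0: "\<And>k. g k (dzero M k) = dzero (cohom A) k" by (rule M.hom_zero[OF gh zH])

  obtain a' e where a': "a' \<in> cocycles M p" and e: "e \<in> coboundaries A p" and ha: "a = dadd A p (f p a') e"
    using fsurj[OF a] by blast
  obtain \<epsilon> where \<epsilon>: "\<epsilon> \<in> dcar A (p - 1)" "e = ddiff A (p - 1) \<epsilon>" using e unfolding A.B_iff by auto
  have a'C: "a' \<in> dcar M p" using a' by (simp add: M.Z_iff)
  have "\<forall>i\<in>{1..n}. \<exists>ze. fst ze \<in> cocycles M (q i) \<and> snd ze \<in> dcar A (q i - 1) \<and>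
       b i = dadd A (q i) (f (q i) (fst ze)) (ddiff A (q i - 1) (snd ze))"
  proof
    fix i assume i: "i \<in> {1..n}"
    obtain z e where z: "z \<in> cocycles M (q i)" "e \<in> coboundaries A (q i)" "b i = dadd A (q i) (f (q i) z) e"
      using fsurj hb i by blast
    obtain u where u: "u \<in> dcar A (q i - 1)" "e = ddiff A (q i - 1) u" using z(2) unfolding A.B_iff by auto
    show "\<exists>ze. fst ze \<in> cocycles M (q i) \<and> snd ze \<in> dcar A (q i - 1) \<and>
       b i = dadd A (q i) (f (q i) (fst ze)) (ddiff A (q i - 1) (snd ze))"
    proof (intro exI[of _ "(z, u)"])
      have bz: "b i = dadd A (q i) (f (q i) z) (ddiff A (q i - 1) u)" using z(3) u(2) by (simp only:)
      show "fst (z, u) \<in> cocycles M (q i) \<and> snd (z, u) \<in> dcar A (q i - 1) \<and>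
       b i = dadd A (q i) (f (q i) (fst (z, u))) (ddiff A (q i - 1) (snd (z, u)))"
        unfolding fst_conv snd_conv using z(1) u(1) bz by (intro conjI)
    qed
  qed
  hence "\<exists>F. \<forall>i\<in>{1..n}. fst (F i) \<in> cocycles M (q i) \<and> snd (F i) \<in> dcar A (q i - 1) \<and>
       b i = dadd A (q i) (f (q i) (fst (F i))) (ddiff A (q i - 1) (snd (F i)))" by (rule bchoice)
  then obtain F where F: "\<forall>i\<in>{1..n}. fst (F i) \<in> cocycles M (q i) \<and> snd (F i) \<in> dcar A (q i - 1) \<and>
       b i = dadd A (q i) (f (q i) (fst (F i))) (ddiff A (q i - 1) (snd (F i)))"
    by blast
  define b' where "b' = (\<lambda>i. fst (F i))"
  define eb where "eb = (\<lambda>i. snd (F i))"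
  have hb': "\<forall>i\<in>{1..n}. b' i \<in> cocycles M (q i) \<and> eb i \<in> dcar A (q i - 1) \<and>
       b i = dadd A (q i) (f (q i) (b' i)) (ddiff A (q i - 1) (eb i))"
    unfolding b'_def eb_def by (rule F)

  have ab_ex: "\<forall>i\<in>{1..n}. dmul M p (q i) a' (b' i) \<in> coboundaries M (p + q i)"
  proof
    fix i assume i: "i \<in> {1..n}"
    have b'i: "b' i \<in> cocycles M (q i)" and ebi: "eb i \<in> dcar A (q i - 1)"
      and bi: "b i = dadd A (q i) (f (q i) (b' i)) (ddiff A (q i - 1) (eb i))" using hb' i by auto
    have b'C: "b' i \<in> dcar M (q i)" using b'i by (simp add: M.Z_iff)
    have fa: "f p a' \<in> cocycles A p" by (rule M.hom_Z[OF fh zA a'])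
    have fb: "f (q i) (b' i) \<in> cocycles A (q i)" by (rule M.hom_Z[OF fh zA b'i])
    have deb: "ddiff A (q i - 1) (eb i) \<in> coboundaries A (q i)" unfolding A.B_iff using ebi by auto
    have "dmul A p (q i) (f p a') (f (q i) (b' i)) \<in> coboundaries A (p + q i)"
    proof -
      have P: "dmul A p (q i) a (b i) \<in> coboundaries A (p + q i)" using hb i by blast
      have P': "dmul A p (q i) (dadd A p (f p a') e) (dadd A (q i) (f (q i) (b' i)) (ddiff A (q i - 1) (eb i)))
          \<in> coboundaries A (p + q i)" using P unfolding ha bi .
      show ?thesis by (rule A.prod_modB[OF fa fb e deb refl P'])
    qed
    hence "f (p + q i) (dmul M p (q i) a' (b' i)) \<in> coboundaries A (p + q i)"
      using M.hom_parts(4)[OF fh a'C b'C] by simp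
    moreover have "dmul M p (q i) a' (b' i) \<in> cocycles M (p + q i)" using a' b'i by (intro M.Z_mul) auto
    ultimately show "dmul M p (q i) a' (b' i) \<in> coboundaries M (p + q i)" using finj by blast
  qed
  have "\<forall>i\<in>{1..n}. \<exists>x. x \<in> dcar M (ed p q i) \<and> ddiff M (ed p q i) x = dmul M p (q i) a' (b' i)"
  proof
    fix i assume i: "i \<in> {1..n}"
    have "dmul M p (q i) a' (b' i) \<in> coboundaries M (p + q i)" using ab_ex i by blast
    then obtain x where "x \<in> dcar M (p + q i - 1)" "dmul M p (q i) a' (b' i) = ddiff M (p + q i - 1) x"
      unfolding M.B_iff by blast
    thus "\<exists>x. x \<in> dcar M (ed p q i) \<and> ddiff M (ed p q i) x = dmul M p (q i) a' (b' i)"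
      by (auto simp: ed_def)
  qed
  hence "\<exists>\<xi>'. \<forall>i\<in>{1..n}. \<xi>' i \<in> dcar M (ed p q i) \<and> ddiff M (ed p q i) (\<xi>' i) = dmul M p (q i) a' (b' i)" by (rule bchoice)
  then obtain \<xi>' where \<xi>': "\<forall>i\<in>{1..n}. \<xi>' i \<in> dcar M (ed p q i) \<and> ddiff M (ed p q i) (\<xi>' i) = dmul M p (q i) a' (b' i)"
    by blast
  (* adjust by cocycles so that g kills xi *)
  have "\<forall>i\<in>{1..n}. \<exists>z. z \<in> cocycles M (ed p q i) \<and>
      dadd (cohom A) (ed p q i) (g (ed p q i) (\<xi>' i)) (g (ed p q i) z) = A.Z0 (ed p q i)"
  proof
    fix i assume i: "i \<in> {1..n}"
    let ?k = "ed p q i"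
    have X: "g ?k (\<xi>' i) \<in> dcar (cohom A) ?k" using M.hom_parts(1)[OF gh] \<xi>' i by blast
    have "dsmul A ?k (-1) (rep (g ?k (\<xi>' i))) \<in> cocycles A ?k"
      using A.Hrep_Z[OF X] by (rule A.Z_smul)
    hence w: "cls A ?k (dsmul A ?k (-1) (rep (g ?k (\<xi>' i)))) \<in> cocycles (cohom A) ?k"
      unfolding A.H_cocycles A.H_car by blast
    obtain z bb where z: "z \<in> cocycles M ?k" and bb: "bb \<in> coboundaries (cohom A) ?k"
      and wz: "cls A ?k (dsmul A ?k (-1) (rep (g ?k (\<xi>' i)))) = dadd (cohom A) ?k (g ?k z) bb"
      using gsurj[OF w] by blast
    have bb0: "bb = A.Z0 ?k" using bb unfolding A.H_coboundaries by simp
    have zC: "z \<in> dcar M ?k" using z by (simp add: M.Z_iff)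
    have Y: "g ?k z \<in> dcar (cohom A) ?k" using M.hom_parts(1)[OF gh zC] .
    show "\<exists>z. z \<in> cocycles M ?k \<and> dadd (cohom A) ?k (g ?k (\<xi>' i)) (g ?k z) = A.Z0 ?k"
      using A.H_cancel[OF X Y] wz bb0 z by blast
  qed
  hence "\<exists>zf. \<forall>i\<in>{1..n}. zf i \<in> cocycles M (ed p q i) \<and>
      dadd (cohom A) (ed p q i) (g (ed p q i) (\<xi>' i)) (g (ed p q i) (zf i)) = A.Z0 (ed p q i)" by (rule bchoice)
  then obtain zf where zf: "\<forall>i\<in>{1..n}. zf i \<in> cocycles M (ed p q i) \<and>
      dadd (cohom A) (ed p q i) (g (ed p q i) (\<xi>' i)) (g (ed p q i) (zf i)) = A.Z0 (ed p q i)"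
    by blast
  define \<xi>'' where "\<xi>'' = (\<lambda>i. dadd M (ed p q i) (\<xi>' i) (zf i))"
  have h\<xi>'': "\<forall>i\<in>{1..n}. \<xi>'' i \<in> dcar M (ed p q i) \<and> b' i \<in> dcar M (q i) \<and>
      ddiff M (ed p q i) (\<xi>'' i) = dmul M p (q i) a' (b' i) \<and> ddiff M (q i) (b' i) = dzero M (q i + 1) \<and>
      g (ed p q i) (\<xi>'' i) = A.Z0 (ed p q i)"
  proof
    fix i assume i: "i \<in> {1..n}"
    let ?k = "ed p q i"
    have x: "\<xi>' i \<in> dcar M ?k" "ddiff M ?k (\<xi>' i) = dmul M p (q i) a' (b' i)" using \<xi>' i by auto
    have z: "zf i \<in> dcar M ?k" "ddiff M ?k (zf i) = dzero M (?k + 1)"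
      "dadd (cohom A) ?k (g ?k (\<xi>' i)) (g ?k (zf i)) = A.Z0 ?k" using zf i by (auto simp: M.Z_iff)
    have b'i: "b' i \<in> dcar M (q i)" "ddiff M (q i) (b' i) = dzero M (q i + 1)" using hb' i by (auto simp: M.Z_iff)
    have m: "dmul M p (q i) a' (b' i) \<in> dcar M (?k + 1)" using a'C b'i by (auto simp: ed_def)
    have "ddiff M ?k (\<xi>'' i) = dmul M p (q i) a' (b' i)"
      unfolding \<xi>''_def using x z m by (simp add: M.d_add)
    moreover have "g ?k (\<xi>'' i) = A.Z0 ?k" unfolding \<xi>''_def using M.hom_parts(2)[OF gh x(1) z(1)] z(3) by simp
    moreover have "\<xi>'' i \<in> dcar M ?k" unfolding \<xi>''_def using x z by simp
    ultimately show "\<xi>'' i \<in> dcar M ?k \<and> b' i \<in> dcar M (q i) \<and>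
      ddiff M ?k (\<xi>'' i) = dmul M p (q i) a' (b' i) \<and> ddiff M (q i) (b' i) = dzero M (q i + 1) \<and>
      g ?k (\<xi>'' i) = A.Z0 ?k" using b'i by blast
  qed
  let ?js = "[1..<Suc n]"
  have setjs: "set ?js = {1..n}" by auto
  let ?S = "Sl M p q b' \<xi>'' ?js"
  have hM: "\<forall>j\<in>set ?js. \<xi>'' j \<in> dcar M (ed p q j) \<and> b' j \<in> dcar M (q j) \<and>
      ddiff M (ed p q j) (\<xi>'' j) = dmul M p (q j) a' (b' j) \<and> ddiff M (q j) (b' j) = dzero M (q j + 1)"
    using h\<xi>'' setjs by auto
  have hM2: "\<forall>j\<in>set ?js. \<xi>'' j \<in> dcar M (ed p q j) \<and> b' j \<in> dcar M (q j)" using hM by auto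
  have SZ: "?S \<in> cocycles M (Sd p q ?js)"
    using M.dP_dS[OF p a'C hM] M.Sl_C[OF hM2] by (simp add: M.Z_iff)
  have "g (Sd p q ?js) ?S = Sl (cohom A) p q (\<lambda>j. g (q j) (b' j)) (\<lambda>j. g (ed p q j) (\<xi>'' j)) ?js"
    by (rule M.hom_Sl[OF gh hM2 gz0])
  also have "\<dots> = Sl (cohom A) p q (\<lambda>j. g (q j) (b' j)) (\<lambda>j. A.Z0 (ed p q j)) ?js"
    using h\<xi>'' setjs by (intro Sl_cong) auto
  also have "\<dots> = A.Z0 (Sd p q ?js)"
  proof (rule A.Sl_H_Z0)
    show "2 \<le> length ?js" using assms(3) by simp
    show "\<forall>j\<in>set ?js. A.Z0 (ed p q j) = A.Z0 (ed p q j) \<and> g (q j) (b' j) \<in> dcar (cohom A) (q j)"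
      using hM2 M.hom_parts(1)[OF gh] by blast
  qed
  finally have "g (Sd p q ?js) ?S \<in> coboundaries (cohom A) (Sd p q ?js)"
    unfolding A.H_coboundaries by simp
  hence SB: "?S \<in> coboundaries M (Sd p q ?js)" using ginj SZ by blast
  have fS: "f (Sd p q ?js) ?S = Sl A p q (\<lambda>j. f (q j) (b' j)) (\<lambda>j. f (ed p q j) (\<xi>'' j)) ?js"
    by (rule M.hom_Sl[OF fh hM2 fz0])
  have fSB: "Sl A p q (\<lambda>j. f (q j) (b' j)) (\<lambda>j. f (ed p q j) (\<xi>'' j)) ?js \<in> coboundaries A (Sd p q ?js)"
    using M.hom_B[OF fh SB] fS by simp
  have fa: "f p a' \<in> cocycles A p" by (rule M.hom_Z[OF fh zA a'])
  have hbA: "\<forall>i\<in>set ?js. b i \<in> cocycles A (q i) \<and> f (q i) (b' i) \<in> cocycles A (q i) \<and> eb i \<in> dcar A (q i - 1) \<and>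
       b i = dadd A (q i) (f (q i) (b' i)) (ddiff A (q i - 1) (eb i)) \<and> f (ed p q i) (\<xi>'' i) \<in> dcar A (ed p q i) \<and>
       ddiff A (ed p q i) (f (ed p q i) (\<xi>'' i)) = dmul A p (q i) (f p a') (f (q i) (b' i))"
  proof
    fix i assume "i \<in> set ?js"
    hence i: "i \<in> {1..n}" using setjs by blast
    have x: "\<xi>'' i \<in> dcar M (ed p q i)" "ddiff M (ed p q i) (\<xi>'' i) = dmul M p (q i) a' (b' i)"
      and b'C: "b' i \<in> dcar M (q i)" using h\<xi>'' i by auto
    have "ddiff A (ed p q i) (f (ed p q i) (\<xi>'' i)) = f (ed p q i + 1) (dmul M p (q i) a' (b' i))"
      using M.hom_parts(6)[OF fh x(1)] x(2) by simp
    also have "\<dots> = dmul A p (q i) (f p a') (f (q i) (b' i))"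
      using M.hom_mulD[OF fh a'C b'C] by (simp add: ed_def)
    finally show "b i \<in> cocycles A (q i) \<and> f (q i) (b' i) \<in> cocycles A (q i) \<and> eb i \<in> dcar A (q i - 1) \<and>
       b i = dadd A (q i) (f (q i) (b' i)) (ddiff A (q i - 1) (eb i)) \<and> f (ed p q i) (\<xi>'' i) \<in> dcar A (ed p q i) \<and>
       ddiff A (ed p q i) (f (ed p q i) (\<xi>'' i)) = dmul A p (q i) (f p a') (f (q i) (b' i))"
      using hb i hb' M.hom_Z[OF fh zA] M.hom_parts(1)[OF fh x(1)] by blast
  qed
  have ha2: "a = dadd A p (f p a') (ddiff A (p - 1) \<epsilon>)" using ha \<epsilon> by simp
  obtain \<xi> where \<xi>: "\<forall>i\<in>set ?js. \<xi> i \<in> dcar A (ed p q i) \<and> ddiff A (ed p q i) (\<xi> i) = dmul A p (q i) a (b i)"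
    and SA: "Sl A p q b \<xi> ?js \<in> coboundaries A (Sd p q ?js)"
    using A.final_A[OF p a fa \<epsilon>(1) ha2 hbA fSB] by blast
  have hA: "\<forall>j\<in>{1..n}. \<xi> j \<in> dcar A (ed p q j) \<and> b j \<in> dcar A (q j)"
    using \<xi> hb setjs by (auto simp: A.Z_iff)
  have ms: "massey_sum A p n q b \<xi> = Sl A p q b \<xi> ?js" by (rule A.massey_sum_Sl[OF hA])
  have "cls A (massey_deg p n q) (massey_sum A p n q b \<xi>) \<in> massey A p a n q b"
    unfolding massey_def using \<xi> setjs by (auto simp: ed_def)
  moreover have "cls A (massey_deg p n q) (massey_sum A p n q b \<xi>) = dzero (cohom A) (massey_deg p n q)"
    unfolding ms A.massey_deg_Sd A.H_zero using SA by (rule A.cls_B)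
  ultimately show False using assms(5) unfolding nontrivial_massey_def by simp
qed



end
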